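(* Consider the setting in the context with $P_i=\tau_iI_n$, $Q_i=\zeta_iI_n$ ($\tau_i,\zeta_i>0$), $\rho>0$, and assume (P1) admits a KKT point. If there exist $\gamma\in(0,2)$ and $\epsilon_i\in(0,1)$, $i\in\mathcal{V}$, such that $$\tau_i>\rho\Big(\frac1{\epsilon_i}-1\Big)d_i,\qquad \zeta_i>\frac{C_i}{m}(C_i+m),\qquad \sum_{i}\epsilon_i<2-\gamma,$$ then the sequence $\bm{u}^k=(\check{\bm{W}}^k,\hat{\bm{W}}^k,\lambda^k)$ generated by the algorithm (with step parameter $\gamma$) converges to an optimal primal–dual (KKT) solution $\bm{u}^*$ of (P1).
   Context: Let $\mathcal{G}=(\mathcal{V},\mathcal{E})$ be a connected undirected graph with $\mathcal{V}=\{1,\dots,N\}$, $N\ge 2$, and let $d_i$ be the degree of $i$. Variables are $\check{\bm{w}}_i,\hat{\bm{w}}_i\in\mathbb{R}^n$; write $\check{\bm{W}}=(\check{\bm{w}}_1,\dots,\check{\bm{w}}_N)$, $\hat{\bm{W}}$ likewise, $\bm{z}_i=(\check{\bm{w}}_i,\hat{\bm{w}}_i)$, $\bm{Z}=(\check{\bm{W}},\hat{\bm{W}})$. The matrix $\bm{A}\in\mathbb{R}^{|\mathcal{E}|n\times Nn}$ has one block row per edge $\{i,j\}$ ($i<j$) with $I_n$ in block column $i$, $-I_n$ in block column $j$, zeros elsewhere; $A_i$ is its $i$-th block column, so $\bm{A}\check{\bm{W}}=\sum_iA_i\check{\bm{w}}_i$ and $A_i^TA_i=d_iI_n$. Each $f_i:\mathbb{R}^n\times\mathbb{R}^n\to\mathbb{R}$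 is differentiable, jointly convex, with $\nabla f_i$ Lipschitz with constant $C_i$. Let $\mu_1\ge0$, $\mu_2>0$, $F_i(\bm{z}_i)=f_i(\check{\bm{w}}_i,\hat{\bm{w}}_i)+\frac{\mu_1}{2}\|\check{\bm{w}}_i\|^2+\frac{\mu_2}{2}\|\hat{\bm{w}}_i\|^2$, $\bm{F}(\bm{Z})=\sum_iF_i(\bm{z}_i)$, and let $m$ be a constant with $0<m\le\mu_2$. Problem (P1): minimize $\bm{F}(\bm{Z})$ s.t. $\bm{A}\check{\bm{W}}=0$; a KKT point is $(\check{\bm{W}}^*,\hat{\bm{W}}^*,\lambda^* )$ with $\bm{A}\check{\bm{W}}^*=0$, $A_i^T\lambda^*=\nabla_{\check{\bm{w}}_i}F_i(\bm{z}_i^* )$, $\nabla_{\hat{\bm{w}}_i}F_i(\bm{z}_i^* )=0$. Algorithm: with $\mathcal{L}_\rho=\bm{F}(\bm{Z})-\lambda^T\bm{A}\check{\bm{W}}+\frac\rho2\|\bm{A}\check{\bm{W}}\|^2$, from arbitrary $\check{\bm{W}}^0,\hat{\bm{W}}^0,\lambda^0$, for $k=0,1,\dots$: (i) for all $i$ in parallel $\check{\bm{w}}_i^{k+1}=\arg\min_{\check{\bm{w}}_i}\mathcal{L}_\rho(\check{\bm{w}}_i,\check{\bm{W}}^k_{-i},\hat{\bm{W}}^k,\lambda^k)+\frac12\|\check{\bm{w}}_i-\check{\bm{w}}_i^k\|^2_{P_i}$ (other blocks held at iteration $k$); (ii) $\lambda^{k+1}=\lambda^k-\gamma\rho\bm{A}\check{\bm{W}}^{k+1}$;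 (iii) for all $i$ in parallel $\hat{\bm{w}}_i^{k+1}=\arg\min_{\hat{\bm{w}}_i}F_i(\check{\bm{w}}_i^{k+1},\hat{\bm{w}}_i)+\frac12\|\hat{\bm{w}}_i-\hat{\bm{w}}_i^k\|^2_{Q_i}$. Here $\|x\|^2_S=x^TSx$. *)

theory Defs
  imports "HOL-Analysis.Analysis"
begin

(* Vertices are 0..<N (the paper's 1..N shifted); an edge {i,j} with i<j is the pair (i,j). *)
definition edge_set :: "nat \<Rightarrow> (nat \<times> nat) set \<Rightarrow> bool" where
  "edge_set N E \<longleftrightarrow> E \<subseteq> {(i,j). i < j \<and> j < N}"

definition connected_graph :: "nat \<Rightarrow> (nat \<times> nat) set \<Rightarrow> bool" where
  "connected_graph N E \<longleftrightarrow> (\<forall>i<N. \<forall>j<N. (i,j) \<in> (E \<union> E\<inverse>)\<^sup>*)"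

definition deg :: "(nat \<times> nat) set \<Rightarrow> nat \<Rightarrow> nat" where
  "deg E i = card {e\<in>E. fst e = i \<or> snd e = i}"

definition Fi :: "(nat \<Rightarrow> 'a::euclidean_space \<times> 'a \<Rightarrow> real) \<Rightarrow> real \<Rightarrow> real \<Rightarrow> nat \<Rightarrow> 'a \<times> 'a \<Rightarrow> real" where
  "Fi f mu1 mu2 i z = f i z + mu1 / 2 * (norm (fst z))\<^sup>2 + mu2 / 2 * (norm (snd z))\<^sup>2"

(* block row of A W for edge e=(i,j): w_i - w_j *)
definition Aw :: "(nat \<Rightarrow> 'a::real_vector) \<Rightarrow> nat \<times> nat \<Rightarrow> 'a" where
  "Aw W e = W (fst e) - W (snd e)"

definition ATlam :: "(nat \<times> nat) set \<Rightarrow> (nat \<times> nat \<Rightarrow> 'a::real_vector) \<Rightarrow> nat \<Rightarrow> 'a" where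
  "ATlam E lam i = (\<Sum>e\<in>{e\<in>E. fst e = i}. lam e) - (\<Sum>e\<in>{e\<in>E. snd e = i}. lam e)"

definition Lrho :: "nat \<Rightarrow> (nat \<times> nat) set \<Rightarrow> (nat \<Rightarrow> 'a::euclidean_space \<times> 'a \<Rightarrow> real) \<Rightarrow> real \<Rightarrow> real \<Rightarrow> real
    \<Rightarrow> (nat \<Rightarrow> 'a) \<Rightarrow> (nat \<Rightarrow> 'a) \<Rightarrow> (nat \<times> nat \<Rightarrow> 'a) \<Rightarrow> real" where
  "Lrho N E f mu1 mu2 rho Wc Wh lam =
     (\<Sum>i<N. Fi f mu1 mu2 i (Wc i, Wh i)) - (\<Sum>e\<in>E. lam e \<bullet> Aw Wc e)
     + rho / 2 * (\<Sum>e\<in>E. (norm (Aw Wc e))\<^sup>2)"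

definition KKT :: "nat \<Rightarrow> (nat \<times> nat) set \<Rightarrow> (nat \<Rightarrow> 'a::euclidean_space \<times> 'a \<Rightarrow> real) \<Rightarrow> real \<Rightarrow> real
    \<Rightarrow> (nat \<Rightarrow> 'a) \<Rightarrow> (nat \<Rightarrow> 'a) \<Rightarrow> (nat \<times> nat \<Rightarrow> 'a) \<Rightarrow> bool" where
  "KKT N E f mu1 mu2 Wc Wh lam \<longleftrightarrow>
     (\<forall>e\<in>E. Aw Wc e = 0) \<and>
     (\<forall>i<N. GDERIV (Fi f mu1 mu2 i) (Wc i, Wh i) :> (ATlam E lam i, 0))"

end

theory Submission
  imports Defs "HOL-Analysis.Analysis"
begin


lemma conv_grad:
  fixes f :: "'b::real_inner \<Rightarrow> real"
  assumes cv: "convex_on UNIV f" and d: "GDERIV f x :> g"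
  shows "f x + inner g (y - x) \<le> f y"
proof -
  define h where "h t = f (x + t *\<^sub>R (y - x))" for t :: real
  have hc: "convex_on UNIV h"
  proof (rule convex_onI)
    fix a t u :: real assume a: "0 < a" "a < 1"
    have "x + ((1 - a) *\<^sub>R t + a *\<^sub>R u) *\<^sub>R (y - x) = (1 - a) *\<^sub>R (x + t *\<^sub>R (y - x)) + a *\<^sub>R (x + u *\<^sub>R (y - x))"
      by (simp add: algebra_simps)
    then show "h ((1 - a) *\<^sub>R t + a *\<^sub>R u) \<le> (1 - a) * h t + a * h u"
      unfolding h_def using convex_onD[OF cv, of a "x + t *\<^sub>R (y - x)" "x + u *\<^sub>R (y - x)"] a by simp
  qed simp
  have "((\<lambda>t. x + t *\<^sub>R (y - x)) has_derivative (\<lambda>t. t *\<^sub>R (y - x))) (at 0)"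
    by (auto intro!: derivative_eq_intros)
  moreover have "(f has_derivative (\<lambda>h. inner h g)) (at (x + 0 *\<^sub>R (y - x)))"
    using d by (simp add: gderiv_def)
  ultimately have "(h has_derivative (\<lambda>t. inner (t *\<^sub>R (y - x)) g)) (at 0)"
    unfolding h_def by (rule has_derivative_compose)
  then have "(h has_field_derivative inner (y - x) g) (at 0 within UNIV)"
    unfolding has_field_derivative_def by (rule has_derivative_eq_rhs) (auto simp: fun_eq_iff)
  from convex_on_imp_above_tangent[OF hc _ _ _ this, of 1] have "h 1 - h 0 \<ge> inner (y - x) g * (1 - 0)"
    by auto
  then show ?thesis unfolding h_def by (simp add: inner_commute)
qed

lemma descent:
  fixes f :: "'b::real_inner \<Rightarrow> real"
  assumes d: "\<And>z. GDERIV f z :> g z" and L: "\<And>a b. norm (g a - g b) \<le> C * norm (a - b)"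
  shows "f y \<le> f x + inner (g x) (y - x) + C / 2 * (norm (y - x))\<^sup>2"
proof -
  define v where "v = y - x"
  define p where "p t = f (x + t *\<^sub>R v) - t * inner (g x) v - C / 2 * t\<^sup>2 * (norm v)\<^sup>2" for t :: real
  have D: "(p has_real_derivative (inner (g (x + t *\<^sub>R v)) v - inner (g x) v - C * t * (norm v)\<^sup>2)) (at t)" for t
  proof -
    have "((\<lambda>t. x + t *\<^sub>R v) has_derivative (\<lambda>s. s *\<^sub>R v)) (at t)"
      by (auto intro!: derivative_eq_intros)
    then have "((\<lambda>t. f (x + t *\<^sub>R v)) has_derivative (\<lambda>s. inner (s *\<^sub>R v) (g (x + t *\<^sub>R v)))) (at t)"
      using d[of "x + t *\<^sub>R v"] unfolding gderiv_def
      by (rule has_derivative_compose)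
    then have "((\<lambda>t. f (x + t *\<^sub>R v)) has_real_derivative inner (g (x + t *\<^sub>R v)) v) (at t)"
      unfolding has_field_derivative_def by (rule has_derivative_eq_rhs) (auto simp: fun_eq_iff inner_commute)
    moreover have "((\<lambda>t. t * inner (g x) v) has_real_derivative inner (g x) v) (at t)"
      using DERIV_cmult_right[OF DERIV_ident[of "at t"], where c = "inner (g x) v"] by simp
    moreover have "((\<lambda>t. C / 2 * t\<^sup>2 * (norm v)\<^sup>2) has_real_derivative C * t * (norm v)\<^sup>2) (at t)"
    proof -
      have "((\<lambda>t. t\<^sup>2) has_real_derivative 2 * t) (at t)"
        using DERIV_pow[of 2 t] by simp
      from DERIV_cmult[OF this, of "C / 2 * (norm v)\<^sup>2"] show ?thesis
        by (simp add: mult.commute mult.left_commute mult.assoc)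
    qed
    ultimately show ?thesis unfolding p_def
      by (intro DERIV_diff)
  qed
  have "p 1 \<le> p 0"
  proof (rule DERIV_nonpos_imp_decreasing_open[of 0 1 p])
    fix t :: real assume t: "0 < t" "t < 1"
    have "inner (g (x + t *\<^sub>R v)) v - inner (g x) v = inner (g (x + t *\<^sub>R v) - g x) v"
      by (simp add: inner_diff_left)
    also have "\<dots> \<le> norm (g (x + t *\<^sub>R v) - g x) * norm v" by (rule norm_cauchy_schwarz)
    also have "\<dots> \<le> (C * norm (t *\<^sub>R v)) * norm v"
      using L[of "x + t *\<^sub>R v" x] by (simp add: mult_right_mono)
    also have "\<dots> = C * t * (norm v)\<^sup>2" using t by (simp add: power2_eq_square)
    finally show "\<exists>y. DERIV p t :> y \<and> y \<le> 0" using D[of t] by auto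
  next
    show "continuous_on {0..1} p"
      using D by (meson DERIV_isCont continuous_at_imp_continuous_on)
  qed simp
  then show ?thesis unfolding p_def v_def by simp
qed

lemma half_coco:
  fixes f :: "'b::real_inner \<Rightarrow> real"
  assumes cv: "convex_on UNIV f" and d: "\<And>z. GDERIV f z :> g z"
    and L: "\<And>a b. norm (g a - g b) \<le> C * norm (a - b)" and C: "C > 0"
  shows "f x - inner (g x) x + (norm (g z - g x))\<^sup>2 / (2 * C) \<le> f z - inner (g x) z"
proof -
  define \<phi> where "\<phi> w = f w - inner (g x) w" for w
  have d\<phi>: "GDERIV \<phi> w :> g w - g x" for w
  proof -
    have "GDERIV (\<lambda>w. inner (g x) w) w :> g x"
      unfolding gderiv_def by (rule has_derivative_eq_rhs, (rule derivative_intros)+) (auto simp: inner_commute fun_eq_iff)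
    then show ?thesis unfolding \<phi>_def by (intro GDERIV_diff d)
  qed
  have L\<phi>: "norm ((g a - g x) - (g b - g x)) \<le> C * norm (a - b)" for a b
    using L[of a b] by simp
  define dd where "dd = g z - g x"
  define w where "w = z - (1 / C) *\<^sub>R dd"
  have "f x + inner (g x) (w - x) \<le> f w" by (rule conv_grad[OF cv d])
  then have 1: "\<phi> x \<le> \<phi> w" unfolding \<phi>_def by (simp add: inner_diff_right)
  have 2: "\<phi> w \<le> \<phi> z + inner (g z - g x) (w - z) + C / 2 * (norm (w - z))\<^sup>2"
    by (rule descent[OF d\<phi> L\<phi>])
  have "inner (g z - g x) (w - z) = - (1 / C) * (norm dd)\<^sup>2"
    unfolding w_def dd_def by (simp add: power2_norm_eq_inner)
  moreover have "C / 2 * (norm (w - z))\<^sup>2 = (norm dd)\<^sup>2 / (2 * C)"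
    unfolding w_def using C by (simp add: power2_eq_square field_simps)
  ultimately have 3: "\<phi> x \<le> \<phi> z + (- (1 / C) * (norm dd)\<^sup>2) + (norm dd)\<^sup>2 / (2 * C)"
    using 1 2 by linarith
  have "- (1 / C) * (norm dd)\<^sup>2 + (norm dd)\<^sup>2 / (2 * C) = - ((norm dd)\<^sup>2 / (2 * C))"
    using C by (simp add: field_simps)
  then have "\<phi> x \<le> \<phi> z - (norm dd)\<^sup>2 / (2 * C)"
    using 3 by linarith
  then show ?thesis unfolding \<phi>_def dd_def by simp
qed

lemma cocoercive:
  fixes f :: "'b::real_inner \<Rightarrow> real"
  assumes cv: "convex_on UNIV f" and d: "\<And>z. GDERIV f z :> g z"
    and L: "\<And>a b. norm (g a - g b) \<le> C * norm (a - b)" and C: "C > 0"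
  shows "(norm (g z - g x))\<^sup>2 \<le> C * inner (g z - g x) (z - x)"
proof -
  have a: "f x - inner (g x) x + (norm (g z - g x))\<^sup>2 / (2 * C) \<le> f z - inner (g x) z"
    by (rule half_coco[OF cv d L C])
  have b: "f z - inner (g z) z + (norm (g x - g z))\<^sup>2 / (2 * C) \<le> f x - inner (g z) x"
    by (rule half_coco[OF cv d L C])
  have n: "norm (g x - g z) = norm (g z - g x)" by (rule norm_minus_commute)
  have "(norm (g z - g x))\<^sup>2 / C \<le> inner (g z - g x) (z - x)"
    using a b n by (simp add: inner_diff_left inner_diff_right field_simps)
  then show ?thesis using C by (simp add: field_simps)
qed



lemma GDERIV_sum:
  assumes "finite S" "\<And>j. j \<in> S \<Longrightarrow> GDERIV (f j) x :> d j"
  shows "GDERIV (\<lambda>x. \<Sum>j\<in>S. f j x) x :> (\<Sum>j\<in>S. d j)"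
proof -
  have "((\<lambda>x. \<Sum>j\<in>S. f j x) has_derivative (\<lambda>h. \<Sum>j\<in>S. inner h (d j))) (at x)"
    by (rule has_derivative_sum) (use assms in \<open>auto simp: gderiv_def\<close>)
  then show ?thesis by (simp add: gderiv_def inner_sum_right)
qed

lemma GDERIV_cmult:
  assumes "GDERIV f x :> d"
  shows "GDERIV (\<lambda>x. c * f x) x :> c *\<^sub>R d"
  using has_derivative_mult_right[OF assms[unfolded gderiv_def], of c] unfolding gderiv_def
  by simp

lemma GDERIV_affine:
  fixes F :: "'b::real_inner \<Rightarrow> real"
  assumes "GDERIV F (b + c *\<^sub>R (w - w0)) :> D"
  shows "GDERIV (\<lambda>w. F (b + c *\<^sub>R (w - w0))) w :> c *\<^sub>R D"
proof -
  have "((\<lambda>w. b + c *\<^sub>R (w - w0)) has_derivative (\<lambda>h. c *\<^sub>R h)) (at w)"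
    by (auto intro!: derivative_eq_intros)
  from has_derivative_compose[OF this assms[unfolded gderiv_def]] show ?thesis
    unfolding gderiv_def by simp
qed

lemma GDERIV_sqnorm: "GDERIV (\<lambda>x. (norm x)\<^sup>2) x :> 2 *\<^sub>R x"
  unfolding gderiv_def by (rule has_derivative_eq_rhs[OF has_derivative_sqnorm_at]) (auto simp: inner_commute)

lemma GDERIV_inner_const: "GDERIV (\<lambda>x. inner a x) x :> a"
  unfolding gderiv_def by (rule has_derivative_eq_rhs, (rule derivative_intros)+) (auto simp: inner_commute fun_eq_iff)

lemma GDERIV_Fi:
  assumes "GDERIV (f i) z :> g"
  shows "GDERIV (Fi f mu1 mu2 i) z :> g + (mu1 *\<^sub>R fst z, mu2 *\<^sub>R snd z)"
proof -
  have a: "GDERIV (\<lambda>z. (norm (fst z))\<^sup>2) z :> (2 *\<^sub>R fst z, 0)"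
  proof -
    have "((\<lambda>z. (norm (fst z))\<^sup>2) has_derivative (\<lambda>h. 2 *\<^sub>R (fst z \<bullet> fst h))) (at z)"
      by (rule has_derivative_compose[OF has_derivative_fst[OF has_derivative_ident] has_derivative_sqnorm_at])
    then show ?thesis unfolding gderiv_def
      by (rule has_derivative_eq_rhs) (auto simp: fun_eq_iff inner_Pair inner_commute)
  qed
  have b: "GDERIV (\<lambda>z. (norm (snd z))\<^sup>2) z :> (0, 2 *\<^sub>R snd z)"
  proof -
    have "((\<lambda>z. (norm (snd z))\<^sup>2) has_derivative (\<lambda>h. 2 *\<^sub>R (snd z \<bullet> snd h))) (at z)"
      by (rule has_derivative_compose[OF has_derivative_snd[OF has_derivative_ident] has_derivative_sqnorm_at])
    then show ?thesis unfolding gderiv_def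
      by (rule has_derivative_eq_rhs) (auto simp: fun_eq_iff inner_Pair inner_commute)
  qed
  have "GDERIV (\<lambda>z. f i z + mu1 / 2 * (norm (fst z))\<^sup>2 + mu2 / 2 * (norm (snd z))\<^sup>2) z :>
          g + (mu1 / 2) *\<^sub>R (2 *\<^sub>R fst z, 0) + (mu2 / 2) *\<^sub>R (0, 2 *\<^sub>R snd z)"
    by (intro GDERIV_add GDERIV_cmult assms a b)
  then show ?thesis unfolding Fi_def[abs_def] by (simp add: algebra_simps)
qed

lemma GDERIV_Fi_fst:
  assumes "GDERIV (f i) (w, y) :> g"
  shows "GDERIV (\<lambda>w. Fi f mu1 mu2 i (w, y)) w :> fst g + mu1 *\<^sub>R w"
proof -
  have "((\<lambda>w. (w, y)) has_derivative (\<lambda>h. (h, 0))) (at w)"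
    by (auto intro!: derivative_eq_intros)
  from has_derivative_compose[OF this GDERIV_Fi[of f i, OF assms, of mu1 mu2, unfolded gderiv_def]]
  show ?thesis unfolding gderiv_def
    by (rule has_derivative_eq_rhs) (auto simp: fun_eq_iff inner_prod_def)
qed

lemma GDERIV_Fi_snd:
  assumes "GDERIV (f i) (x, w) :> g"
  shows "GDERIV (\<lambda>w. Fi f mu1 mu2 i (x, w)) w :> snd g + mu2 *\<^sub>R w"
proof -
  have "((\<lambda>w. (x, w)) has_derivative (\<lambda>h. (0, h))) (at w)"
    by (auto intro!: derivative_eq_intros)
  from has_derivative_compose[OF this GDERIV_Fi[of f i, OF assms, of mu1 mu2, unfolded gderiv_def]]
  show ?thesis unfolding gderiv_def
    by (rule has_derivative_eq_rhs) (auto simp: fun_eq_iff inner_prod_def)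
qed

lemma GDERIV_min_zero:
  fixes \<phi> :: "'b::real_inner \<Rightarrow> real"
  assumes "GDERIV \<phi> x :> D" "\<And>w. \<phi> x \<le> \<phi> w"
  shows "D = 0"
proof -
  have "(\<lambda>h. inner h D) = (\<lambda>h. 0)"
    by (rule has_derivative_local_min[OF assms(1)[unfolded gderiv_def]]) (use assms(2) in auto)
  then have "inner D D = 0" by metis
  then show ?thesis by simp
qed

lemma GDERIV_unique:
  assumes "GDERIV \<phi> x :> D" "GDERIV \<phi> x :> D'"
  shows "D = D'"
proof -
  have "(\<lambda>h. inner h D) = (\<lambda>h. inner h D')"
    using has_derivative_unique assms unfolding gderiv_def by blast
  then have "inner (D - D') D = inner (D - D') D'" by metis
  then have "inner (D - D') (D - D') = 0" by (simp add: inner_diff_right)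
  then show ?thesis by simp
qed



definition cf :: "nat \<Rightarrow> nat \<times> nat \<Rightarrow> real" where
  "cf i e = (if fst e = i then 1 else if snd e = i then -1 else 0)"

lemma edge_props: "edge_set N E \<Longrightarrow> e \<in> E \<Longrightarrow> fst e < snd e \<and> snd e < N"
  unfolding edge_set_def by auto

lemma finE: "edge_set N E \<Longrightarrow> finite E"
proof -
  assume "edge_set N E"
  then have "E \<subseteq> {..<N} \<times> {..<N}" unfolding edge_set_def by auto
  then show ?thesis by (rule finite_subset) auto
qed

lemma ATlam_cf:
  assumes "edge_set N E"
  shows "ATlam E \<mu> i = (\<Sum>e\<in>E. cf i e *\<^sub>R \<mu> e)"
proof -
  have fin: "finite E" using finE[OF assms] .
  have "(\<Sum>e\<in>E. cf i e *\<^sub>R \<mu> e) = (\<Sum>e\<in>E. (if fst e = i then \<mu> e else 0) - (if snd e = i then \<mu> e else 0))"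
  proof (rule sum.cong)
    fix e assume "e \<in> E"
    then have "fst e \<noteq> snd e" using edge_props[OF assms \<open>e \<in> E\<close>] by simp
    then show "cf i e *\<^sub>R \<mu> e = (if fst e = i then \<mu> e else 0) - (if snd e = i then \<mu> e else 0)"
      by (cases "fst e = i"; cases "snd e = i") (auto simp: cf_def)
  qed simp
  also have "\<dots> = (\<Sum>e\<in>E. if fst e = i then \<mu> e else 0) - (\<Sum>e\<in>E. if snd e = i then \<mu> e else 0)"
    by (rule sum_subtractf)
  also have "\<dots> = ATlam E \<mu> i"
    unfolding ATlam_def using sum.inter_filter[OF fin, of \<mu> "\<lambda>e. fst e = i"] sum.inter_filter[OF fin, of \<mu> "\<lambda>e. snd e = i"]
    by simp
  finally show ?thesis by simp
qed

lemma Aw_cf: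
  assumes "edge_set N E" "e \<in> E"
  shows "Aw w e = (\<Sum>i<N. cf i e *\<^sub>R w i)"
proof -
  have ne: "fst e \<noteq> snd e" and lt: "fst e < N" "snd e < N" using edge_props[OF assms] by auto
  have "(\<Sum>i<N. cf i e *\<^sub>R w i) = (\<Sum>i<N. (if fst e = i then w i else 0) - (if snd e = i then w i else 0))"
    by (rule sum.cong) (use ne in \<open>auto simp: cf_def\<close>)
  also have "\<dots> = (\<Sum>i<N. if fst e = i then w i else 0) - (\<Sum>i<N. if snd e = i then w i else 0)"
    by (rule sum_subtractf)
  also have "\<dots> = Aw w e" using lt unfolding Aw_def by simp
  finally show ?thesis by simp
qed

lemma pair_sum:
  assumes "edge_set N E"
  shows "(\<Sum>i<N. inner (ATlam E \<mu> i) (w i)) = (\<Sum>e\<in>E. inner (\<mu> e) (Aw w e))"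
proof -
  have "(\<Sum>i<N. inner (ATlam E \<mu> i) (w i)) = (\<Sum>i<N. \<Sum>e\<in>E. cf i e * inner (\<mu> e) (w i))"
    by (simp add: ATlam_cf[OF assms] inner_sum_left)
  also have "\<dots> = (\<Sum>e\<in>E. \<Sum>i<N. cf i e * inner (\<mu> e) (w i))"
    by (rule sum.swap)
  also have "\<dots> = (\<Sum>e\<in>E. inner (\<mu> e) (Aw w e))"
    by (rule sum.cong) (simp_all add: Aw_cf[OF assms] inner_sum_right)
  finally show ?thesis .
qed

lemma Aw_upd:
  assumes "edge_set N E" "e \<in> E"
  shows "Aw (W(i := w)) e = Aw W e + cf i e *\<^sub>R (w - W i)"
proof -
  have ne: "fst e \<noteq> snd e" using edge_props[OF assms] by auto
  then show ?thesis unfolding Aw_def cf_def by (auto simp: algebra_simps)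
qed

lemma deg_cf:
  assumes "edge_set N E"
  shows "real (deg E i) = (\<Sum>e\<in>E. (cf i e)\<^sup>2)"
proof -
  have fin: "finite E" using finE[OF assms] .
  have "real (deg E i) = (\<Sum>e\<in>E. if fst e = i \<or> snd e = i then 1 else 0)"
    unfolding deg_def using sum.inter_filter[OF fin, of "\<lambda>_. 1::real" "\<lambda>e. fst e = i \<or> snd e = i"] by simp
  also have "\<dots> = (\<Sum>e\<in>E. (cf i e)\<^sup>2)"
    by (rule sum.cong) (auto simp: cf_def)
  finally show ?thesis .
qed

lemma ATlam_diff: "ATlam E (\<lambda>e. a e - b e) i = ATlam E a i - ATlam E b i"
  unfolding ATlam_def by (simp add: sum_subtractf algebra_simps)

lemma ATlam_add: "ATlam E (\<lambda>e. a e + b e) i = ATlam E a i + ATlam E b i"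
  unfolding ATlam_def by (simp add: sum.distrib algebra_simps)

lemma ATlam_self:
  assumes "edge_set N E"
  shows "ATlam E (\<lambda>e. cf i e *\<^sub>R u) i = real (deg E i) *\<^sub>R u"
  unfolding ATlam_cf[OF assms] deg_cf[OF assms]
  by (simp add: scaleR_sum_left power2_eq_square)



lemma GDERIV_sqnorm_shift: "GDERIV (\<lambda>w. (norm (w - a))\<^sup>2) w :> 2 *\<^sub>R (w - a)"
  using GDERIV_affine[of "\<lambda>x. (norm x)\<^sup>2" 0 1 w a "2 *\<^sub>R (w - a)"] GDERIV_sqnorm[of "w - a"] by simp

lemma Lrho_upd:
  assumes "edge_set N E" "i < N"
  shows "Lrho N E f mu1 mu2 rho (W(i := w)) Y lam =
    (\<Sum>j\<in>{..<N} - {i}. Fi f mu1 mu2 j (W j, Y j)) + Fi f mu1 mu2 i (w, Y i)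
    - (\<Sum>e\<in>E. inner (lam e) (Aw W e + cf i e *\<^sub>R (w - W i)))
    + rho / 2 * (\<Sum>e\<in>E. (norm (Aw W e + cf i e *\<^sub>R (w - W i)))\<^sup>2)"
proof -
  have "(\<Sum>j<N. Fi f mu1 mu2 j ((W(i := w)) j, Y j)) =
      Fi f mu1 mu2 i (w, Y i) + (\<Sum>j\<in>{..<N} - {i}. Fi f mu1 mu2 j ((W(i := w)) j, Y j))"
    using sum.remove[of "{..<N}" i "\<lambda>j. Fi f mu1 mu2 j ((W(i := w)) j, Y j)"] assms(2) by simp
  also have "(\<Sum>j\<in>{..<N} - {i}. Fi f mu1 mu2 j ((W(i := w)) j, Y j)) = (\<Sum>j\<in>{..<N} - {i}. Fi f mu1 mu2 j (W j, Y j))"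
    by (rule sum.cong) auto
  finally have 1: "(\<Sum>j<N. Fi f mu1 mu2 j ((W(i := w)) j, Y j)) =
      Fi f mu1 mu2 i (w, Y i) + (\<Sum>j\<in>{..<N} - {i}. Fi f mu1 mu2 j (W j, Y j))" .
  have 2: "(\<Sum>e\<in>E. inner (lam e) (Aw (W(i := w)) e)) = (\<Sum>e\<in>E. inner (lam e) (Aw W e + cf i e *\<^sub>R (w - W i)))"
    by (rule sum.cong) (simp_all add: Aw_upd[OF assms(1)])
  have 3: "(\<Sum>e\<in>E. (norm (Aw (W(i := w)) e))\<^sup>2) = (\<Sum>e\<in>E. (norm (Aw W e + cf i e *\<^sub>R (w - W i)))\<^sup>2)"
    by (rule sum.cong) (simp_all add: Aw_upd[OF assms(1)])
  show ?thesis unfolding Lrho_def 1 2 3 by simp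
qed

lemma xstep_eq:
  assumes E: "edge_set N E" and i: "i < N" and grad: "\<And>z. GDERIV (f i) z :> G z"
    and min: "\<And>w. Lrho N E f mu1 mu2 rho (W(i := w0)) Y lam + tau / 2 * (norm (w0 - W i))\<^sup>2
               \<le> Lrho N E f mu1 mu2 rho (W(i := w)) Y lam + tau / 2 * (norm (w - W i))\<^sup>2"
  shows "fst (G (w0, Y i)) + mu1 *\<^sub>R w0 - ATlam E lam i + rho *\<^sub>R ATlam E (Aw (W(i := w0))) i
          + tau *\<^sub>R (w0 - W i) = 0"
proof -
  have fin: "finite E" using finE[OF E] .
  define \<psi> where "\<psi> w = (\<Sum>j\<in>{..<N} - {i}. Fi f mu1 mu2 j (W j, Y j)) + Fi f mu1 mu2 i (w, Y i)
    - (\<Sum>e\<in>E. inner (lam e) (Aw W e + cf i e *\<^sub>R (w - W i)))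
    + rho / 2 * (\<Sum>e\<in>E. (norm (Aw W e + cf i e *\<^sub>R (w - W i)))\<^sup>2) + tau / 2 * (norm (w - W i))\<^sup>2" for w
  have \<psi>eq: "\<psi> w = Lrho N E f mu1 mu2 rho (W(i := w)) Y lam + tau / 2 * (norm (w - W i))\<^sup>2" for w
    unfolding \<psi>_def Lrho_upd[OF E i] by simp
  define D where "D = fst (G (w0, Y i)) + mu1 *\<^sub>R w0 - (\<Sum>e\<in>E. cf i e *\<^sub>R lam e)
     + (rho / 2) *\<^sub>R (\<Sum>e\<in>E. cf i e *\<^sub>R (2 *\<^sub>R (Aw W e + cf i e *\<^sub>R (w0 - W i))))
     + (tau / 2) *\<^sub>R (2 *\<^sub>R (w0 - W i))"
  have d1: "GDERIV (\<lambda>w. (\<Sum>j\<in>{..<N} - {i}. Fi f mu1 mu2 j (W j, Y j))) w0 :> 0"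
    by (rule GDERIV_const)
  have d2: "GDERIV (\<lambda>w. Fi f mu1 mu2 i (w, Y i)) w0 :> fst (G (w0, Y i)) + mu1 *\<^sub>R w0"
    by (rule GDERIV_Fi_fst[of f i, OF grad])
  have d3: "GDERIV (\<lambda>w. \<Sum>e\<in>E. inner (lam e) (Aw W e + cf i e *\<^sub>R (w - W i))) w0 :> (\<Sum>e\<in>E. cf i e *\<^sub>R lam e)"
  proof (rule GDERIV_sum[OF fin])
    fix e
    show "GDERIV (\<lambda>w. inner (lam e) (Aw W e + cf i e *\<^sub>R (w - W i))) w0 :> cf i e *\<^sub>R lam e"
      by (rule GDERIV_affine[of "inner (lam e)"], rule GDERIV_inner_const)
  qed
  have d4: "GDERIV (\<lambda>w. \<Sum>e\<in>E. (norm (Aw W e + cf i e *\<^sub>R (w - W i)))\<^sup>2) w0 :>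
       (\<Sum>e\<in>E. cf i e *\<^sub>R (2 *\<^sub>R (Aw W e + cf i e *\<^sub>R (w0 - W i))))"
  proof (rule GDERIV_sum[OF fin])
    fix e
    show "GDERIV (\<lambda>w. (norm (Aw W e + cf i e *\<^sub>R (w - W i)))\<^sup>2) w0 :> cf i e *\<^sub>R (2 *\<^sub>R (Aw W e + cf i e *\<^sub>R (w0 - W i)))"
      by (rule GDERIV_affine[of "\<lambda>x. (norm x)\<^sup>2"], rule GDERIV_sqnorm)
  qed
  have d5: "GDERIV (\<lambda>w. (norm (w - W i))\<^sup>2) w0 :> 2 *\<^sub>R (w0 - W i)"
    by (rule GDERIV_sqnorm_shift)
  have "GDERIV \<psi> w0 :> D"
    unfolding \<psi>_def D_def
    using GDERIV_add[OF GDERIV_add[OF GDERIV_diff[OF GDERIV_add[OF d1 d2] d3] GDERIV_cmult[OF d4, of "rho / 2"]] GDERIV_cmult[OF d5, of "tau / 2"]]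
    by simp
  moreover have "\<psi> w0 \<le> \<psi> w" for w unfolding \<psi>eq by (rule min)
  ultimately have "D = 0" by (rule GDERIV_min_zero)
  moreover have "(\<Sum>e\<in>E. cf i e *\<^sub>R (2 *\<^sub>R (Aw W e + cf i e *\<^sub>R (w0 - W i)))) = 2 *\<^sub>R ATlam E (Aw (W(i := w0))) i"
    unfolding ATlam_cf[OF E] scaleR_sum_right
    by (rule sum.cong) (simp_all add: Aw_upd[OF E])
  ultimately show ?thesis unfolding D_def ATlam_cf[OF E, of lam] by simp
qed

lemma ystep_eq:
  assumes grad: "\<And>z. GDERIV (f i) z :> G z"
    and min: "\<And>w. Fi f mu1 mu2 i (x, w0) + zeta / 2 * (norm (w0 - y))\<^sup>2
               \<le> Fi f mu1 mu2 i (x, w) + zeta / 2 * (norm (w - y))\<^sup>2"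
  shows "snd (G (x, w0)) + mu2 *\<^sub>R w0 + zeta *\<^sub>R (w0 - y) = 0"
proof -
  have "GDERIV (\<lambda>w. Fi f mu1 mu2 i (x, w) + zeta / 2 * (norm (w - y))\<^sup>2) w0 :>
      snd (G (x, w0)) + mu2 *\<^sub>R w0 + (zeta / 2) *\<^sub>R (2 *\<^sub>R (w0 - y))"
    by (intro GDERIV_add GDERIV_cmult GDERIV_Fi_snd grad GDERIV_sqnorm_shift)
  from GDERIV_min_zero[OF this min] show ?thesis by simp
qed



lemma young_m:
  fixes p q m c :: real
  assumes "m > 0" "p \<ge> 0" "q \<ge> 0" "c \<ge> 0"
  shows "c * q * p \<le> m * p\<^sup>2 + c\<^sup>2 / (4 * m) * q\<^sup>2"
proof -
  have "0 \<le> (2 * m * p - c * q)\<^sup>2 / (4 * m)" using assms by simp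
  also have "\<dots> = m * p\<^sup>2 + c\<^sup>2 / (4 * m) * q\<^sup>2 - c * q * p"
    using assms by (simp add: field_simps power2_eq_square)
  finally show ?thesis by simp
qed

lemma p2_arith:
  fixes nbC aX bY bv C nv mu2 nY zv eY m K zeta nYo :: real
  assumes "nbC \<le> aX + bY - bv" "0 \<le> nbC + bv + C / 4 * nv" "bY = - (mu2 * nY) - zv - eY"
    "- eY \<le> m * nY + K * nv" "zv = zeta / 2 * (nY - nYo + nv)" "m * nY \<le> mu2 * nY"
  shows "aX \<ge> zeta / 2 * (nY - nYo) + (zeta / 2 - K - C / 4) * nv"
proof -
  have "zeta / 2 * (nY - nYo + nv) = zeta / 2 * (nY - nYo) + zeta / 2 * nv" by (simp only: distrib_left)
  moreover have "(zeta / 2 - K - C / 4) * nv = zeta / 2 * nv - K * nv - C / 4 * nv" by (simp add: algebra_simps)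
  ultimately show ?thesis using assms by (smt (verit))
qed

lemma p2:
  fixes f :: "'a::real_inner \<times> 'a \<Rightarrow> real"
  assumes cv: "convex_on UNIV f" and grad: "\<And>z. GDERIV f z :> G z"
    and L: "\<And>a b. norm (G a - G b) \<le> C * norm (a - b)" and C: "C > 0"
    and m: "m > 0" "m \<le> mu2"
    and yeq: "snd (G (x1, y1)) + mu2 *\<^sub>R y1 + zeta *\<^sub>R (y1 - y0) = 0"
    and ykkt: "snd (G (xs, ys)) + mu2 *\<^sub>R ys = 0"
  shows "inner (fst (G (x1, y0)) - fst (G (xs, ys))) (x1 - xs) \<ge>
     zeta / 2 * ((norm (y1 - ys))\<^sup>2 - (norm (y0 - ys))\<^sup>2) + (zeta / 2 - C\<^sup>2 / (4 * m) - C / 4) * (norm (y1 - y0))\<^sup>2"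
proof -
  define a where "a = fst (G (x1, y0)) - fst (G (xs, ys))"
  define b where "b = snd (G (x1, y0)) - snd (G (xs, ys))"
  define e where "e = snd (G (x1, y1)) - snd (G (x1, y0))"
  define X where "X = x1 - xs"
  define Y where "Y = y1 - ys"
  define v where "v = y1 - y0"
  have yo: "y0 - ys = Y - v" unfolding Y_def v_def by simp
  have co: "(norm (G (x1, y0) - G (xs, ys)))\<^sup>2 \<le> C * inner (G (x1, y0) - G (xs, ys)) ((x1, y0) - (xs, ys))"
    by (rule cocoercive[OF cv grad L C])
  have e1: "(norm (G (x1, y0) - G (xs, ys)))\<^sup>2 = (norm a)\<^sup>2 + (norm b)\<^sup>2"
    unfolding a_def b_def by (simp add: power2_norm_eq_inner inner_prod_def)
  have e2: "inner (G (x1, y0) - G (xs, ys)) ((x1, y0) - (xs, ys)) = inner a X + inner b (Y - v)"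
    unfolding a_def b_def X_def yo[symmetric] by (simp add: inner_prod_def)
  have "(norm a)\<^sup>2 + (norm b)\<^sup>2 \<le> C * (inner a X + inner b (Y - v))"
    using co unfolding e1 e2 .
  moreover have "0 \<le> (norm a)\<^sup>2" by simp
  moreover have "C * (inner a X + inner b (Y - v)) = C * (inner a X + inner b Y - inner b v)"
    by (simp add: inner_diff_right algebra_simps)
  ultimately have F1: "(norm b)\<^sup>2 \<le> C * (inner a X + inner b Y - inner b v)"
    by linarith
  have F1': "(norm b)\<^sup>2 / C \<le> inner a X + inner b Y - inner b v"
    using F1 C by (simp add: pos_divide_le_eq mult.commute)
  have s1: "snd (G (x1, y1)) = - (mu2 *\<^sub>R y1) - zeta *\<^sub>R (y1 - y0)"
  proof -
    have "snd (G (x1, y1)) = (snd (G (x1, y1)) + mu2 *\<^sub>R y1 + zeta *\<^sub>R (y1 - y0)) - mu2 *\<^sub>R y1 - zeta *\<^sub>R (y1 - y0)"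
      by simp
    also have "\<dots> = - (mu2 *\<^sub>R y1) - zeta *\<^sub>R (y1 - y0)" unfolding yeq by simp
    finally show ?thesis .
  qed
  have s2: "snd (G (xs, ys)) = - (mu2 *\<^sub>R ys)"
  proof -
    have "snd (G (xs, ys)) = (snd (G (xs, ys)) + mu2 *\<^sub>R ys) - mu2 *\<^sub>R ys" by simp
    also have "\<dots> = - (mu2 *\<^sub>R ys)" unfolding ykkt by simp
    finally show ?thesis .
  qed
  have bdef: "b = - (mu2 *\<^sub>R Y) - zeta *\<^sub>R v - e"
    unfolding b_def e_def s1 s2 Y_def v_def by (simp add: algebra_simps)
  have F2: "inner b Y = - (mu2 * (norm Y)\<^sup>2) - zeta * inner v Y - inner e Y"
    unfolding bdef by (simp add: inner_diff_left power2_norm_eq_inner)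
  have ne: "norm e \<le> C * norm v"
  proof -
    have "norm (snd (G (x1, y1) - G (x1, y0))) \<le> norm (G (x1, y1) - G (x1, y0))"
      by (metis norm_snd_le prod.collapse)
    then have "norm e \<le> norm (G (x1, y1) - G (x1, y0))"
      unfolding e_def by simp
    also have "\<dots> \<le> C * norm ((x1, y1) - (x1, y0))" by (rule L)
    also have "norm ((x1, y1) - (x1, y0)) = norm v" unfolding v_def by (simp add: norm_Pair)
    finally show ?thesis .
  qed
  have F3: "- inner e Y \<le> m * (norm Y)\<^sup>2 + C\<^sup>2 / (4 * m) * (norm v)\<^sup>2"
  proof -
    have "- inner e Y \<le> norm e * norm Y"
      using norm_cauchy_schwarz[of "- e" Y] by simp
    also have "\<dots> \<le> C * norm v * norm Y" using ne by (simp add: mult_right_mono)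
    also have "\<dots> \<le> m * (norm Y)\<^sup>2 + C\<^sup>2 / (4 * m) * (norm v)\<^sup>2"
      using young_m[of m "norm Y" "norm v" C] m C by simp
    finally show ?thesis .
  qed
  have F4: "0 \<le> (norm b)\<^sup>2 / C + inner b v + C / 4 * (norm v)\<^sup>2"
  proof -
    have q: "(norm (b + (C / 2) *\<^sub>R v))\<^sup>2 = (norm b)\<^sup>2 + C * inner b v + (C / 2) * (C / 2) * (norm v)\<^sup>2"
      by (simp add: power2_norm_eq_inner inner_add_left inner_add_right inner_commute algebra_simps)
    have "0 \<le> (norm (b + (C / 2) *\<^sub>R v))\<^sup>2 / C" using C by simp
    also have "\<dots> = (norm b)\<^sup>2 / C + inner b v + C / 4 * (norm v)\<^sup>2"
      unfolding q using C by (simp add: field_simps)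
    finally show ?thesis .
  qed
  have F5: "zeta * inner v Y = zeta / 2 * ((norm Y)\<^sup>2 - (norm (Y - v))\<^sup>2 + (norm v)\<^sup>2)"
  proof -
    have eq: "(norm (Y - v))\<^sup>2 = (norm Y)\<^sup>2 - 2 * inner v Y + (norm v)\<^sup>2"
      by (simp add: power2_norm_eq_inner inner_diff_left inner_diff_right inner_commute)
    show ?thesis unfolding eq by (simp add: algebra_simps)
  qed
  have F6: "m * (norm Y)\<^sup>2 \<le> mu2 * (norm Y)\<^sup>2" using m by (simp add: mult_right_mono)
  have "inner a X \<ge> zeta / 2 * ((norm Y)\<^sup>2 - (norm (Y - v))\<^sup>2) + (zeta / 2 - C\<^sup>2 / (4 * m) - C / 4) * (norm v)\<^sup>2"
    by (rule p2_arith[OF F1' F4 F2 F3 F5 F6])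
  then show ?thesis unfolding a_def X_def yo[symmetric] unfolding Y_def v_def by simp
qed



lemma young_inner:
  fixes a b :: "'a::real_inner"
  assumes "\<epsilon> > 0"
  shows "inner a b \<le> \<epsilon> / 2 * (norm a)\<^sup>2 + (norm b)\<^sup>2 / (2 * \<epsilon>)"
proof -
  have "(norm (\<epsilon> *\<^sub>R a - b))\<^sup>2 = \<epsilon> * \<epsilon> * (norm a)\<^sup>2 - 2 * \<epsilon> * inner a b + (norm b)\<^sup>2"
    by (simp add: power2_norm_eq_inner inner_diff_left inner_diff_right inner_commute algebra_simps)
  moreover have "0 \<le> (norm (\<epsilon> *\<^sub>R a - b))\<^sup>2 / (2 * \<epsilon>)" using assms by simp
  ultimately have "0 \<le> (\<epsilon> * \<epsilon> * (norm a)\<^sup>2 - 2 * \<epsilon> * inner a b + (norm b)\<^sup>2) / (2 * \<epsilon>)" by simp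
  also have "\<dots> = \<epsilon> / 2 * (norm a)\<^sup>2 - inner a b + (norm b)\<^sup>2 / (2 * \<epsilon>)"
    using assms by (simp add: field_simps)
  finally show ?thesis by simp
qed

lemma cf_cases: "cf i e = 1 \<or> cf i e = -1 \<or> cf i e = 0"
  unfolding cf_def by auto

lemma cf_young:
  fixes a b :: "'a::real_inner"
  assumes "\<epsilon> > 0"
  shows "cf i e * inner a b \<le> (cf i e)\<^sup>2 * ((norm b)\<^sup>2 / (2 * \<epsilon>) + \<epsilon> / 2 * (norm a)\<^sup>2)"
proof -
  have 1: "inner a b \<le> \<epsilon> / 2 * (norm a)\<^sup>2 + (norm b)\<^sup>2 / (2 * \<epsilon>)" by (rule young_inner[OF assms])
  have 2: "inner (- a) b \<le> \<epsilon> / 2 * (norm (- a))\<^sup>2 + (norm b)\<^sup>2 / (2 * \<epsilon>)" by (rule young_inner[OF assms])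
  show ?thesis using cf_cases[of i e] 1 2 by auto
qed

lemma cf_sq_le: "(cf i e)\<^sup>2 \<le> 1"
  unfolding cf_def by auto

lemma M_bound:
  fixes u :: "nat \<Rightarrow> 'a::real_inner" and r :: "nat \<times> nat \<Rightarrow> 'a"
  assumes E: "edge_set N E" and eps: "\<And>i. i < N \<Longrightarrow> eps i > 0"
  shows "(\<Sum>e\<in>E. inner (Aw u e) (r e)) \<le>
     (\<Sum>i<N. real (deg E i) / (2 * eps i) * (norm (u i))\<^sup>2) + (\<Sum>i<N. eps i) / 2 * (\<Sum>e\<in>E. (norm (r e))\<^sup>2)"
proof -
  have "(\<Sum>e\<in>E. inner (Aw u e) (r e)) = (\<Sum>e\<in>E. inner (r e) (Aw u e))"
    by (simp add: inner_commute)
  also have "\<dots> = (\<Sum>i<N. inner (ATlam E r i) (u i))"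
    by (rule pair_sum[OF E, symmetric])
  also have "\<dots> = (\<Sum>i<N. \<Sum>e\<in>E. cf i e * inner (r e) (u i))"
    by (simp add: ATlam_cf[OF E] inner_sum_left)
  also have "\<dots> \<le> (\<Sum>i<N. \<Sum>e\<in>E. (cf i e)\<^sup>2 * ((norm (u i))\<^sup>2 / (2 * eps i) + eps i / 2 * (norm (r e))\<^sup>2))"
    by (intro sum_mono cf_young eps) auto
  also have "\<dots> = (\<Sum>i<N. (\<Sum>e\<in>E. (cf i e)\<^sup>2) * ((norm (u i))\<^sup>2 / (2 * eps i)))
                 + (\<Sum>i<N. \<Sum>e\<in>E. (cf i e)\<^sup>2 * eps i / 2 * (norm (r e))\<^sup>2)"
    by (simp add: distrib_left sum.distrib sum_distrib_right mult.assoc sum_divide_distrib)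
  also have "(\<Sum>i<N. (\<Sum>e\<in>E. (cf i e)\<^sup>2) * ((norm (u i))\<^sup>2 / (2 * eps i))) = (\<Sum>i<N. real (deg E i) / (2 * eps i) * (norm (u i))\<^sup>2)"
    by (simp add: deg_cf[OF E])
  also have "(\<Sum>i<N. \<Sum>e\<in>E. (cf i e)\<^sup>2 * eps i / 2 * (norm (r e))\<^sup>2) = (\<Sum>e\<in>E. (\<Sum>i<N. (cf i e)\<^sup>2 * eps i) / 2 * (norm (r e))\<^sup>2)"
    by (subst sum.swap) (simp add: sum_distrib_right sum_divide_distrib)
  also have "\<dots> \<le> (\<Sum>e\<in>E. (\<Sum>i<N. eps i) / 2 * (norm (r e))\<^sup>2)"
  proof (rule sum_mono)
    fix e assume "e \<in> E"
    have "(\<Sum>i<N. (cf i e)\<^sup>2 * eps i) \<le> (\<Sum>i<N. eps i)"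
    proof (rule sum_mono)
      fix i assume "i \<in> {..<N}"
      then have "eps i > 0" using eps by auto
      then show "(cf i e)\<^sup>2 * eps i \<le> eps i" using cf_sq_le[of i e] by (simp add: mult_left_le_one_le)
    qed
    then show "(\<Sum>i<N. (cf i e)\<^sup>2 * eps i) / 2 * (norm (r e))\<^sup>2 \<le> (\<Sum>i<N. eps i) / 2 * (norm (r e))\<^sup>2"
      by (intro mult_right_mono divide_right_mono) auto
  qed
  also have "\<dots> = (\<Sum>i<N. eps i) / 2 * (\<Sum>e\<in>E. (norm (r e))\<^sup>2)"
    by (simp add: sum_distrib_left)
  finally show ?thesis by simp
qed



definition Vfun :: "nat \<Rightarrow> (nat \<times> nat) set \<Rightarrow> (nat \<Rightarrow> real) \<Rightarrow> (nat \<Rightarrow> real) \<Rightarrow> real \<Rightarrow> real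
   \<Rightarrow> (nat \<Rightarrow> 'a::real_normed_vector) \<Rightarrow> (nat \<Rightarrow> 'a) \<Rightarrow> (nat \<times> nat \<Rightarrow> 'a) \<Rightarrow> (nat \<Rightarrow> 'a) \<Rightarrow> (nat \<Rightarrow> 'a) \<Rightarrow> (nat \<times> nat \<Rightarrow> 'a) \<Rightarrow> real" where
  "Vfun N E tau zeta rho gamma X Y L xs ys ls =
     (\<Sum>i<N. (tau i + rho * real (deg E i)) / 2 * (norm (X i - xs i))\<^sup>2)
     + (\<Sum>i<N. zeta i / 2 * (norm (Y i - ys i))\<^sup>2)
     + (\<Sum>e\<in>E. (norm (L e - ls e))\<^sup>2) / (2 * gamma * rho)"

lemma ATlam_cong: "(\<And>e. e \<in> E \<Longrightarrow> a e = b e) \<Longrightarrow> ATlam E a i = ATlam E b i"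
  unfolding ATlam_def by (intro arg_cong2[where f = "(-)"] sum.cong) auto

lemma Aw_diff: "Aw (\<lambda>i. a i - b i) e = Aw a e - Aw b e"
  unfolding Aw_def by (simp add: algebra_simps)

lemma pi_arith:
  fixes gX mu1 nX A rho B Cc d uX tau P c nv nXo nu :: real
  assumes "gX + mu1 * nX = A - rho * (B - Cc + d * uX) - tau * uX" "gX \<ge> P + c * nv" "mu1 * nX \<ge> 0"
    "uX = (nX - nXo + nu) / 2"
  shows "P + c * nv + (tau + rho * d) / 2 * (nX - nXo) + (tau + rho * d) / 2 * nu \<le> A - rho * B + rho * Cc"
proof -
  have "rho * (B - Cc + d * uX) + tau * uX = rho * B - rho * Cc + (tau + rho * d) / 2 * (nX - nXo) + (tau + rho * d) / 2 * nu"
    unfolding assms(4) by (simp add: field_simps)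
  then show ?thesis using assms(1-3) by linarith
qed

lemma final_arith:
  fixes SY1 SY0 Sv SX1 SX0 Su LR rho R M Sud Se L1 L0 gamma Sb :: real
  assumes "(SY1 - SY0) + Sv + (SX1 - SX0) + Su \<le> LR - rho * R + rho * M"
    "M \<le> Sud + Se / 2 * R" "L1 = L0 - 2 * (gamma * rho) * LR + (gamma * rho)\<^sup>2 * R"
    "Sb = Su - rho * Sud" "rho > 0" "gamma > 0"
  shows "SX1 + SY1 + L1 / (2 * gamma * rho) + Sv + Sb + rho / 2 * (2 - gamma - Se) * R \<le> SX0 + SY0 + L0 / (2 * gamma * rho)"
proof -
  have 1: "L1 / (2 * gamma * rho) = L0 / (2 * gamma * rho) - LR + gamma * rho / 2 * R"
    unfolding assms(3) using assms(5,6) by (simp add: field_simps power2_eq_square)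
  have 2: "rho * M \<le> rho * Sud + rho * Se / 2 * R"
    using mult_left_mono[OF assms(2), of rho] assms(5) by (simp add: algebra_simps)
  have 3: "rho / 2 * (2 - gamma - Se) * R = rho * R - gamma * rho / 2 * R - rho * Se / 2 * R"
    by (simp add: field_simps)
  show ?thesis using assms(1,4) 1 2 3 by linarith
qed

lemma descent_step:
  fixes E :: "(nat \<times> nat) set" and G :: "nat \<Rightarrow> 'a::real_inner \<times> 'a \<Rightarrow> 'a \<times> 'a"
    and f :: "nat \<Rightarrow> 'a \<times> 'a \<Rightarrow> real"
    and x0 x1 y0 y1 xs ys :: "nat \<Rightarrow> 'a" and l0 l1 ls :: "nat \<times> nat \<Rightarrow> 'a"
  assumes E: "edge_set N E"
    and grad: "\<And>i z. i < N \<Longrightarrow> GDERIV (f i) z :> G i z"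
    and cvx: "\<And>i. i < N \<Longrightarrow> convex_on UNIV (f i)"
    and Lp: "\<And>i a b. i < N \<Longrightarrow> norm (G i a - G i b) \<le> Cp i * norm (a - b)"
    and Cp: "\<And>i. i < N \<Longrightarrow> Cp i > 0"
    and mu1: "mu1 \<ge> 0" and m: "0 < m" "m \<le> mu2" and rho: "rho > 0" and gamma: "gamma > 0"
    and eps: "\<And>i. i < N \<Longrightarrow> eps i > 0"
    and xeq: "\<And>i. i < N \<Longrightarrow> fst (G i (x1 i, y0 i)) + mu1 *\<^sub>R x1 i - ATlam E l0 i
         + rho *\<^sub>R ATlam E (Aw (x0(i := x1 i))) i + tau i *\<^sub>R (x1 i - x0 i) = 0"
    and yeq: "\<And>i. i < N \<Longrightarrow> snd (G i (x1 i, y1 i)) + mu2 *\<^sub>R y1 i + zeta i *\<^sub>R (y1 i - y0 i) = 0"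
    and lupd: "\<And>e. e \<in> E \<Longrightarrow> l1 e = l0 e - (gamma * rho) *\<^sub>R Aw x1 e"
    and kA: "\<And>e. e \<in> E \<Longrightarrow> Aw xs e = 0"
    and kx: "\<And>i. i < N \<Longrightarrow> fst (G i (xs i, ys i)) + mu1 *\<^sub>R xs i = ATlam E ls i"
    and ky: "\<And>i. i < N \<Longrightarrow> snd (G i (xs i, ys i)) + mu2 *\<^sub>R ys i = 0"
  shows "Vfun N E tau zeta rho gamma x1 y1 l1 xs ys ls
     + (\<Sum>i<N. (zeta i / 2 - (Cp i)\<^sup>2 / (4 * m) - Cp i / 4) * (norm (y1 i - y0 i))\<^sup>2)
     + (\<Sum>i<N. (tau i + rho * real (deg E i) - rho * real (deg E i) / eps i) / 2 * (norm (x1 i - x0 i))\<^sup>2)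
     + rho / 2 * (2 - gamma - (\<Sum>i<N. eps i)) * (\<Sum>e\<in>E. (norm (Aw x1 e))\<^sup>2)
     \<le> Vfun N E tau zeta rho gamma x0 y0 l0 xs ys ls"
proof -
  define u where "u i = x1 i - x0 i" for i
  define r where "r e = Aw x1 e" for e
  define Au where "Au e = Aw u e" for e
  define X where "X i = x1 i - xs i" for i
  define d where "d i = real (deg E i)" for i
  define c where "c i = zeta i / 2 - (Cp i)\<^sup>2 / (4 * m) - Cp i / 4" for i
  have AwW': "Aw (x0(i := x1 i)) e = r e - Au e + cf i e *\<^sub>R u i" if "e \<in> E" for i e
  proof -
    have "Aw x0 e = Aw x1 e - Aw u e" unfolding u_def Aw_diff by simp
    then show ?thesis unfolding Aw_upd[OF E that] r_def Au_def u_def by simp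
  qed
  have ATW': "ATlam E (Aw (x0(i := x1 i))) i = ATlam E r i - ATlam E Au i + d i *\<^sub>R u i" for i
  proof -
    have "ATlam E (Aw (x0(i := x1 i))) i = ATlam E (\<lambda>e. (r e - Au e) + cf i e *\<^sub>R u i) i"
      by (rule ATlam_cong) (simp add: AwW')
    also have "\<dots> = ATlam E r i - ATlam E Au i + d i *\<^sub>R u i"
      unfolding ATlam_add ATlam_diff ATlam_self[OF E] d_def ..
    finally show ?thesis .
  qed
  have Pi: "zeta i / 2 * ((norm (y1 i - ys i))\<^sup>2 - (norm (y0 i - ys i))\<^sup>2) + c i * (norm (y1 i - y0 i))\<^sup>2
      + (tau i + rho * d i) / 2 * ((norm (x1 i - xs i))\<^sup>2 - (norm (x0 i - xs i))\<^sup>2)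
      + (tau i + rho * d i) / 2 * (norm (u i))\<^sup>2
      \<le> inner (ATlam E l0 i - ATlam E ls i) (X i) - rho * inner (ATlam E r i) (X i) + rho * inner (ATlam E Au i) (X i)"
    if i: "i < N" for i
  proof -
    let ?g = "fst (G i (x1 i, y0 i)) - fst (G i (xs i, ys i))"
    have veq: "?g + mu1 *\<^sub>R X i = (ATlam E l0 i - ATlam E ls i)
         - rho *\<^sub>R (ATlam E r i - ATlam E Au i + d i *\<^sub>R u i) - tau i *\<^sub>R u i"
    proof -
      have "?g + mu1 *\<^sub>R X i = (fst (G i (x1 i, y0 i)) + mu1 *\<^sub>R x1 i - ATlam E l0 i
         + rho *\<^sub>R ATlam E (Aw (x0(i := x1 i))) i + tau i *\<^sub>R (x1 i - x0 i))
         - (fst (G i (xs i, ys i)) + mu1 *\<^sub>R xs i - ATlam E ls i)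
         + (ATlam E l0 i - ATlam E ls i) - rho *\<^sub>R ATlam E (Aw (x0(i := x1 i))) i - tau i *\<^sub>R (x1 i - x0 i)"
        unfolding X_def by (simp add: algebra_simps)
      also have "\<dots> = (ATlam E l0 i - ATlam E ls i)
         - rho *\<^sub>R (ATlam E r i - ATlam E Au i + d i *\<^sub>R u i) - tau i *\<^sub>R u i"
        unfolding xeq[OF i] unfolding kx[OF i] unfolding ATW' u_def by simp
      finally show ?thesis .
    qed
    have seq: "inner ?g (X i) + mu1 * (norm (X i))\<^sup>2 = inner (ATlam E l0 i - ATlam E ls i) (X i)
        - rho * (inner (ATlam E r i) (X i) - inner (ATlam E Au i) (X i) + d i * inner (u i) (X i))
        - tau i * inner (u i) (X i)"
    proof -
      have "inner (?g + mu1 *\<^sub>R X i) (X i) = inner ((ATlam E l0 i - ATlam E ls i)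
         - rho *\<^sub>R (ATlam E r i - ATlam E Au i + d i *\<^sub>R u i) - tau i *\<^sub>R u i) (X i)"
        unfolding veq ..
      then show ?thesis
        by (simp add: inner_add_left inner_diff_left power2_norm_eq_inner algebra_simps)
    qed
    have p: "inner ?g (X i) \<ge> zeta i / 2 * ((norm (y1 i - ys i))\<^sup>2 - (norm (y0 i - ys i))\<^sup>2) + c i * (norm (y1 i - y0 i))\<^sup>2"
      unfolding X_def c_def
      by (rule p2[OF cvx[OF i] grad[OF i] Lp[OF i] Cp[OF i] m yeq[OF i] ky[OF i]])
    have "0 \<le> mu1 * (norm (X i))\<^sup>2" using mu1 by simp
    moreover have "inner (u i) (X i) = ((norm (x1 i - xs i))\<^sup>2 - (norm (x0 i - xs i))\<^sup>2 + (norm (u i))\<^sup>2) / 2"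
    proof -
      have "x0 i - xs i = X i - u i" unfolding X_def u_def by simp
      then have "(norm (x0 i - xs i))\<^sup>2 = (norm (X i))\<^sup>2 - 2 * inner (u i) (X i) + (norm (u i))\<^sup>2"
        by (simp add: power2_norm_eq_inner inner_diff_left inner_diff_right inner_commute)
      then show ?thesis unfolding X_def by simp
    qed
    ultimately show ?thesis
      using pi_arith[OF seq p] unfolding X_def by simp
  qed
  define SY1 where "SY1 = (\<Sum>i<N. zeta i / 2 * (norm (y1 i - ys i))\<^sup>2)"
  define SY0 where "SY0 = (\<Sum>i<N. zeta i / 2 * (norm (y0 i - ys i))\<^sup>2)"
  define SX1 where "SX1 = (\<Sum>i<N. (tau i + rho * real (deg E i)) / 2 * (norm (x1 i - xs i))\<^sup>2)"
  define SX0 where "SX0 = (\<Sum>i<N. (tau i + rho * real (deg E i)) / 2 * (norm (x0 i - xs i))\<^sup>2)"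
  define Sv where "Sv = (\<Sum>i<N. c i * (norm (y1 i - y0 i))\<^sup>2)"
  define Su where "Su = (\<Sum>i<N. (tau i + rho * d i) / 2 * (norm (u i))\<^sup>2)"
  define Sud where "Sud = (\<Sum>i<N. real (deg E i) / (2 * eps i) * (norm (u i))\<^sup>2)"
  define Sb where "Sb = (\<Sum>i<N. (tau i + rho * real (deg E i) - rho * real (deg E i) / eps i) / 2 * (norm (x1 i - x0 i))\<^sup>2)"
  define LR where "LR = (\<Sum>e\<in>E. inner (l0 e - ls e) (r e))"
  define R where "R = (\<Sum>e\<in>E. (norm (r e))\<^sup>2)"
  define M where "M = (\<Sum>e\<in>E. inner (Au e) (r e))"
  define L1 where "L1 = (\<Sum>e\<in>E. (norm (l1 e - ls e))\<^sup>2)"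
  define L0 where "L0 = (\<Sum>e\<in>E. (norm (l0 e - ls e))\<^sup>2)"
  define Se where "Se = (\<Sum>i<N. eps i)"
  have AwX: "Aw X e = r e" if "e \<in> E" for e
    unfolding X_def Aw_diff r_def kA[OF that] by simp
  have S: "(\<Sum>i<N. zeta i / 2 * ((norm (y1 i - ys i))\<^sup>2 - (norm (y0 i - ys i))\<^sup>2) + c i * (norm (y1 i - y0 i))\<^sup>2
      + (tau i + rho * d i) / 2 * ((norm (x1 i - xs i))\<^sup>2 - (norm (x0 i - xs i))\<^sup>2)
      + (tau i + rho * d i) / 2 * (norm (u i))\<^sup>2)
      \<le> (\<Sum>i<N. inner (ATlam E l0 i - ATlam E ls i) (X i) - rho * inner (ATlam E r i) (X i) + rho * inner (ATlam E Au i) (X i))"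
    by (intro sum_mono Pi) simp
  have SL: "(\<Sum>i<N. zeta i / 2 * ((norm (y1 i - ys i))\<^sup>2 - (norm (y0 i - ys i))\<^sup>2) + c i * (norm (y1 i - y0 i))\<^sup>2
      + (tau i + rho * d i) / 2 * ((norm (x1 i - xs i))\<^sup>2 - (norm (x0 i - xs i))\<^sup>2)
      + (tau i + rho * d i) / 2 * (norm (u i))\<^sup>2) = (SY1 - SY0) + Sv + (SX1 - SX0) + Su"
    unfolding SY1_def SY0_def Sv_def SX1_def SX0_def Su_def d_def
    by (simp add: sum.distrib sum_subtractf right_diff_distrib)
  have SA: "(\<Sum>i<N. inner (ATlam E l0 i - ATlam E ls i) (X i)) = LR"
  proof -
    have "(\<Sum>i<N. inner (ATlam E l0 i - ATlam E ls i) (X i)) = (\<Sum>i<N. inner (ATlam E (\<lambda>e. l0 e - ls e) i) (X i))"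
      by (simp add: ATlam_diff)
    also have "\<dots> = (\<Sum>e\<in>E. inner (l0 e - ls e) (Aw X e))" by (rule pair_sum[OF E])
    also have "\<dots> = LR" unfolding LR_def by (rule sum.cong) (simp_all add: AwX)
    finally show ?thesis .
  qed
  have SB: "(\<Sum>i<N. inner (ATlam E r i) (X i)) = R"
  proof -
    have "(\<Sum>i<N. inner (ATlam E r i) (X i)) = (\<Sum>e\<in>E. inner (r e) (Aw X e))" by (rule pair_sum[OF E])
    also have "\<dots> = R" unfolding R_def by (rule sum.cong) (simp_all add: AwX power2_norm_eq_inner)
    finally show ?thesis .
  qed
  have SC: "(\<Sum>i<N. inner (ATlam E Au i) (X i)) = M"
  proof -
    have "(\<Sum>i<N. inner (ATlam E Au i) (X i)) = (\<Sum>e\<in>E. inner (Au e) (Aw X e))" by (rule pair_sum[OF E])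
    also have "\<dots> = M" unfolding M_def by (rule sum.cong) (simp_all add: AwX)
    finally show ?thesis .
  qed
  have SR: "(\<Sum>i<N. inner (ATlam E l0 i - ATlam E ls i) (X i) - rho * inner (ATlam E r i) (X i) + rho * inner (ATlam E Au i) (X i))
     = LR - rho * R + rho * M"
    unfolding SA[symmetric] SB[symmetric] SC[symmetric]
    by (simp add: sum.distrib sum_subtractf sum_distrib_left)
  have F1: "(SY1 - SY0) + Sv + (SX1 - SX0) + Su \<le> LR - rho * R + rho * M"
    using S unfolding SL SR .
  have F2: "M \<le> Sud + Se / 2 * R"
    unfolding M_def Sud_def Se_def R_def Au_def by (rule M_bound[OF E eps])
  have F3: "L1 = L0 - 2 * (gamma * rho) * LR + (gamma * rho)\<^sup>2 * R"
  proof -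
    have "(norm (l1 e - ls e))\<^sup>2 = (norm (l0 e - ls e))\<^sup>2 - 2 * (gamma * rho) * inner (l0 e - ls e) (r e) + (gamma * rho)\<^sup>2 * (norm (r e))\<^sup>2"
      if "e \<in> E" for e
    proof -
      have eq: "l1 e - ls e = (l0 e - ls e) - (gamma * rho) *\<^sub>R r e" unfolding lupd[OF that] r_def by simp
      show ?thesis unfolding eq power2_norm_eq_inner
        by (simp add: inner_diff_left inner_diff_right inner_commute power2_eq_square algebra_simps)
    qed
    then have "L1 = (\<Sum>e\<in>E. (norm (l0 e - ls e))\<^sup>2 - 2 * (gamma * rho) * inner (l0 e - ls e) (r e) + (gamma * rho)\<^sup>2 * (norm (r e))\<^sup>2)"
      unfolding L1_def by (intro sum.cong) auto
    then show ?thesis unfolding L0_def LR_def R_def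
      by (simp add: sum.distrib sum_subtractf sum_distrib_left)
  qed
  have F4: "Sb = Su - rho * Sud"
  proof -
    have "Sb = (\<Sum>i<N. (tau i + rho * d i) / 2 * (norm (u i))\<^sup>2 - rho * (real (deg E i) / (2 * eps i) * (norm (u i))\<^sup>2))"
      unfolding Sb_def
    proof (rule sum.cong)
      fix i assume "i \<in> {..<N}"
      then have "eps i > 0" using eps by auto
      then show "(tau i + rho * real (deg E i) - rho * real (deg E i) / eps i) / 2 * (norm (x1 i - x0 i))\<^sup>2 =
          (tau i + rho * d i) / 2 * (norm (u i))\<^sup>2 - rho * (real (deg E i) / (2 * eps i) * (norm (u i))\<^sup>2)"
        unfolding d_def u_def by (simp add: field_simps)
    qed simp
    then show ?thesis unfolding Su_def Sud_def by (simp add: sum_subtractf sum_distrib_left)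
  qed
  have "SX1 + SY1 + L1 / (2 * gamma * rho) + Sv + Sb + rho / 2 * (2 - gamma - Se) * R \<le> SX0 + SY0 + L0 / (2 * gamma * rho)"
    by (rule final_arith[OF F1 F2 F3 F4 rho gamma])
  then show ?thesis
    unfolding Vfun_def SX1_def[symmetric] SX0_def[symmetric] SY1_def[symmetric] SY0_def[symmetric]
      L1_def[symmetric] L0_def[symmetric]
    unfolding Sv_def Sb_def R_def Se_def r_def c_def by simp
qed



lemma sq_bound_tendsto:
  fixes X :: "nat \<Rightarrow> 'a::real_normed_vector"
  assumes c: "c > 0" and b: "\<And>k. c * (norm (X k))\<^sup>2 \<le> B k" and B: "B \<longlonglongrightarrow> 0"
  shows "X \<longlonglongrightarrow> 0"
proof -
  have "(\<lambda>k. B k / c) \<longlonglongrightarrow> 0 / c" using c by (intro tendsto_intros B) auto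
  then have B': "(\<lambda>k. B k / c) \<longlonglongrightarrow> 0" by simp
  have "(\<lambda>k. (norm (X k))\<^sup>2) \<longlonglongrightarrow> 0"
  proof (rule tendsto_sandwich[of "\<lambda>_. 0" _ _ "\<lambda>k. B k / c"])
    show "\<forall>\<^sub>F n in sequentially. 0 \<le> (norm (X n))\<^sup>2" by simp
    show "\<forall>\<^sub>F n in sequentially. (norm (X n))\<^sup>2 \<le> B n / c"
      using b c by (simp add: pos_le_divide_eq mult.commute)
  qed (use B' in auto)
  then have "(\<lambda>k. sqrt ((norm (X k))\<^sup>2)) \<longlonglongrightarrow> sqrt 0" by (intro tendsto_intros)
  then have "(\<lambda>k. norm (X k)) \<longlonglongrightarrow> 0" by simp
  then show ?thesis by (simp add: tendsto_norm_zero_iff)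
qed

lemma sq_bound_tendsto':
  fixes X :: "nat \<Rightarrow> 'a::real_normed_vector"
  assumes c: "c > 0" and b: "\<And>k. c * (norm (X k - l))\<^sup>2 \<le> B k" and B: "B \<longlonglongrightarrow> 0"
  shows "X \<longlonglongrightarrow> l"
proof -
  have "(\<lambda>k. X k - l) \<longlonglongrightarrow> 0" by (rule sq_bound_tendsto[OF c b B])
  then show ?thesis by (simp add: LIM_zero_iff)
qed

lemma multi_subseq:
  fixes s :: "'j \<Rightarrow> nat \<Rightarrow> 'a::heine_borel"
  assumes "finite I" "\<And>j. j \<in> I \<Longrightarrow> bounded (range (s j))"
  shows "\<exists>r l. strict_mono r \<and> (\<forall>j\<in>I. (s j \<circ> r) \<longlonglongrightarrow> l j)"
  using assms
proof (induction I rule: finite_induct)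
  case empty
  show ?case by (rule exI[of _ id]) (auto simp: strict_mono_def)
next
  case (insert j I)
  have "\<exists>r l. strict_mono r \<and> (\<forall>j\<in>I. (s j \<circ> r) \<longlonglongrightarrow> l j)"
    by (rule insert.IH) (use insert.prems in auto)
  then obtain r l where r: "strict_mono r" and l: "\<forall>j\<in>I. (s j \<circ> r) \<longlonglongrightarrow> l j" by auto
  have "bounded (range (s j \<circ> r))"
    using insert.prems[of j] by (rule bounded_subset) auto
  then obtain lj r' where r': "strict_mono r'" and lj: "((s j \<circ> r) \<circ> r') \<longlonglongrightarrow> lj"
    using bounded_imp_convergent_subsequence by blast
  show ?case
  proof (intro exI conjI ballI)
    show "strict_mono (r \<circ> r')" using r r' by (rule strict_mono_o)
    fix j' assume "j' \<in> insert j I"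
    then show "(s j' \<circ> (r \<circ> r')) \<longlonglongrightarrow> (l(j := lj)) j'"
    proof
      assume "j' = j" then show ?thesis using lj by (simp add: o_assoc)
    next
      assume j': "j' \<in> I"
      then have "j' \<noteq> j" using insert.hyps by auto
      then show ?thesis using LIMSEQ_subseq_LIMSEQ[OF l[rule_format, OF j'] r'] j' by (simp add: o_assoc)
    qed
  qed
qed

lemma dec_sub_zero:
  fixes V :: "nat \<Rightarrow> real"
  assumes dec: "\<And>k. V (Suc k) \<le> V k" and nn: "\<And>k. 0 \<le> V k" and r: "strict_mono r"
    and lim: "(V \<circ> r) \<longlonglongrightarrow> 0"
  shows "V \<longlonglongrightarrow> 0"
proof -
  have "decseq V" using dec by (simp add: decseq_SucI)
  moreover have "\<forall>i. 0 \<le> V i" using nn by auto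
  ultimately obtain L where L: "V \<longlonglongrightarrow> L" by (rule decseq_convergent)
  have "(V \<circ> r) \<longlonglongrightarrow> L" by (rule LIMSEQ_subseq_LIMSEQ[OF L r])
  with lim have "L = 0" using LIMSEQ_unique by blast
  with L show ?thesis by simp
qed

lemma telescoping_zero:
  fixes V D :: "nat \<Rightarrow> real"
  assumes D: "\<And>k. 0 \<le> D k" and step: "\<And>k. V (Suc k) + D k \<le> V k" and nn: "\<And>k. 0 \<le> V k"
  shows "D \<longlonglongrightarrow> 0"
proof -
  have tel: "(\<Sum>k<n. D k) \<le> V 0 - V n" for n
  proof (induction n)
    case 0 then show ?case by simp
  next
    case (Suc n) then show ?case using step[of n] by simp
  qed
  have "(\<Sum>k<n. D k) \<le> V 0" for n using tel[of n] nn[of n] by linarith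
  then have "summable D" by (intro summableI_nonneg_bounded[where x = "V 0"] D)
  then show ?thesis by (rule summable_LIMSEQ_zero)
qed

lemma lip_norm:
  assumes "lipschitz_on C UNIV g"
  shows "norm (g a - g b) \<le> C * norm (a - b)" "C \<ge> 0"
  using assms unfolding lipschitz_on_def dist_norm by auto

lemma lip_cont:
  assumes "lipschitz_on C UNIV g"
  shows "isCont g x"
proof -
  have "continuous_on UNIV g" using lipschitz_on_continuous_on[OF assms] .
  then show ?thesis by (simp add: continuous_on_eq_continuous_at)
qed

lemma Cp_exists:
  fixes C m zeta :: real
  assumes C: "C \<ge> 0" and m: "m > 0" and z: "zeta > C / m * (C + m)"
  shows "\<exists>Cp. C \<le> Cp \<and> 0 < Cp \<and> 0 < zeta / 2 - Cp\<^sup>2 / (4 * m) - Cp / 4"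
proof -
  have "m * (C / m * (C + m)) < m * zeta" by (rule mult_strict_left_mono[OF z m])
  moreover have "m * (C / m * (C + m)) = C * C + C * m" using m by (simp add: field_simps)
  ultimately have mz: "C * C + C * m < m * zeta" by simp
  define \<delta> where "\<delta> = 2 * m * zeta - C * C - m * C"
  have cc: "0 \<le> C * C" "0 \<le> C * m" using C m by auto
  have dpos: "\<delta> > 0"
  proof -
    have "2 * m * zeta = 2 * (m * zeta)" "m * C = C * m" by simp_all
    then show ?thesis unfolding \<delta>_def using mz cc by linarith
  qed
  define K where "K = 2 * C + m + 1"
  have Kpos: "K > 0" unfolding K_def using C m by simp
  define t where "t = min 1 (\<delta> / (2 * K))"
  have tpos: "t > 0" unfolding t_def using dpos Kpos by simp
  have t1: "t \<le> 1" unfolding t_def by simp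
  have "t \<le> \<delta> / (2 * K)" unfolding t_def by simp
  then have "t * (2 * K) \<le> \<delta>" using Kpos by (simp add: pos_le_divide_eq)
  then have t2: "t * K \<le> \<delta> / 2" by simp
  define Cp where "Cp = C + t"
  have e1: "Cp * Cp + m * Cp = C * C + m * C + t * (2 * C + t + m)"
    unfolding Cp_def by (simp add: algebra_simps)
  have "t * (2 * C + t + m) \<le> t * K"
    unfolding K_def using t1 tpos by (intro mult_left_mono) auto
  then have lt0: "Cp * Cp + m * Cp < C * C + m * C + \<delta>"
    using e1 t2 dpos by linarith
  have "C * C + m * C + \<delta> = 2 * m * zeta" unfolding \<delta>_def by simp
  then have lt: "Cp * Cp + m * Cp < 2 * m * zeta" using lt0 by simp
  have "zeta / 2 - Cp\<^sup>2 / (4 * m) - Cp / 4 = (2 * m * zeta - (Cp * Cp + m * Cp)) / (4 * m)"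
    using m by (simp add: field_simps power2_eq_square)
  also have "\<dots> > 0" using lt m by simp
  finally show ?thesis using tpos C unfolding Cp_def by (intro exI[of _ "C + t"]) auto
qed



lemma kkt_eqs:
  assumes K: "KKT N E f mu1 mu2 xs ys ls" and grad: "\<And>i z. i < N \<Longrightarrow> GDERIV (f i) z :> G i z"
  shows "\<And>e. e \<in> E \<Longrightarrow> Aw xs e = 0"
    and "\<And>i. i < N \<Longrightarrow> fst (G i (xs i, ys i)) + mu1 *\<^sub>R xs i = ATlam E ls i"
    and "\<And>i. i < N \<Longrightarrow> snd (G i (xs i, ys i)) + mu2 *\<^sub>R ys i = 0"
proof -
  show "\<And>e. e \<in> E \<Longrightarrow> Aw xs e = 0" using K unfolding KKT_def by auto
next
  fix i assume i: "i < N"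
  have d1: "GDERIV (Fi f mu1 mu2 i) (xs i, ys i) :> (ATlam E ls i, 0)" using K i unfolding KKT_def by auto
  have d2: "GDERIV (Fi f mu1 mu2 i) (xs i, ys i) :> G i (xs i, ys i) + (mu1 *\<^sub>R xs i, mu2 *\<^sub>R ys i)"
    using GDERIV_Fi[of f i "(xs i, ys i)" "G i (xs i, ys i)" mu1 mu2, OF grad[OF i]] by simp
  have eq: "G i (xs i, ys i) + (mu1 *\<^sub>R xs i, mu2 *\<^sub>R ys i) = (ATlam E ls i, 0)"
    by (rule GDERIV_unique[OF d2 d1])
  show "fst (G i (xs i, ys i)) + mu1 *\<^sub>R xs i = ATlam E ls i"
    using arg_cong[OF eq, of fst] by simp
  show "snd (G i (xs i, ys i)) + mu2 *\<^sub>R ys i = 0"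
    using arg_cong[OF eq, of snd] by simp
qed

lemma kkt_of_eqs:
  assumes grad: "\<And>i z. i < N \<Longrightarrow> GDERIV (f i) z :> G i z"
    and A: "\<And>e. e \<in> E \<Longrightarrow> Aw xs e = 0"
    and X: "\<And>i. i < N \<Longrightarrow> fst (G i (xs i, ys i)) + mu1 *\<^sub>R xs i = ATlam E ls i"
    and Y: "\<And>i. i < N \<Longrightarrow> snd (G i (xs i, ys i)) + mu2 *\<^sub>R ys i = 0"
  shows "KKT N E f mu1 mu2 xs ys ls"
  unfolding KKT_def
proof (intro conjI ballI allI impI)
  fix e assume "e \<in> E" then show "Aw xs e = 0" by (rule A)
next
  fix i assume i: "i < N"
  have d2: "GDERIV (Fi f mu1 mu2 i) (xs i, ys i) :> G i (xs i, ys i) + (mu1 *\<^sub>R xs i, mu2 *\<^sub>R ys i)"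
    using GDERIV_Fi[of f i "(xs i, ys i)" "G i (xs i, ys i)" mu1 mu2, OF grad[OF i]] by simp
  have "G i (xs i, ys i) + (mu1 *\<^sub>R xs i, mu2 *\<^sub>R ys i) = (ATlam E ls i, 0)"
    using X[OF i] Y[OF i] by (simp add: prod_eq_iff)
  then show "GDERIV (Fi f mu1 mu2 i) (xs i, ys i) :> (ATlam E ls i, 0)" using d2 by simp
qed

lemma Vfun_ge:
  assumes w1: "\<And>i. i < N \<Longrightarrow> 0 \<le> tau i + rho * real (deg E i)" and w2: "\<And>i. i < N \<Longrightarrow> 0 \<le> zeta i"
    and gr: "gamma * rho > 0" and fin: "finite E"
  shows "\<And>i. i < N \<Longrightarrow> (tau i + rho * real (deg E i)) / 2 * (norm (X i - xs i))\<^sup>2 \<le> Vfun N E tau zeta rho gamma X Y L xs ys ls"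
    and "\<And>i. i < N \<Longrightarrow> zeta i / 2 * (norm (Y i - ys i))\<^sup>2 \<le> Vfun N E tau zeta rho gamma X Y L xs ys ls"
    and "\<And>e. e \<in> E \<Longrightarrow> 1 / (2 * gamma * rho) * (norm (L e - ls e))\<^sup>2 \<le> Vfun N E tau zeta rho gamma X Y L xs ys ls"
    and "0 \<le> Vfun N E tau zeta rho gamma X Y L xs ys ls"
proof -
  define A where "A = (\<Sum>i<N. (tau i + rho * real (deg E i)) / 2 * (norm (X i - xs i))\<^sup>2)"
  define B where "B = (\<Sum>i<N. zeta i / 2 * (norm (Y i - ys i))\<^sup>2)"
  define Cc where "Cc = (\<Sum>e\<in>E. (norm (L e - ls e))\<^sup>2)"
  have V: "Vfun N E tau zeta rho gamma X Y L xs ys ls = A + B + Cc / (2 * gamma * rho)"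
    unfolding Vfun_def A_def B_def Cc_def by simp
  have An: "0 \<le> A" unfolding A_def using w1 by (intro sum_nonneg) auto
  have Bn: "0 \<le> B" unfolding B_def using w2 by (intro sum_nonneg) auto
  have Cn: "0 \<le> Cc / (2 * gamma * rho)" unfolding Cc_def using gr by (intro divide_nonneg_pos sum_nonneg) auto
  show "0 \<le> Vfun N E tau zeta rho gamma X Y L xs ys ls" unfolding V using An Bn Cn by simp
  fix i assume i: "i < N"
  have "(tau i + rho * real (deg E i)) / 2 * (norm (X i - xs i))\<^sup>2 \<le> A"
    unfolding A_def by (rule member_le_sum) (use i w1 in auto)
  then show "(tau i + rho * real (deg E i)) / 2 * (norm (X i - xs i))\<^sup>2 \<le> Vfun N E tau zeta rho gamma X Y L xs ys ls"
    unfolding V using Bn Cn by simp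
next
  define A where "A = (\<Sum>i<N. (tau i + rho * real (deg E i)) / 2 * (norm (X i - xs i))\<^sup>2)"
  define B where "B = (\<Sum>i<N. zeta i / 2 * (norm (Y i - ys i))\<^sup>2)"
  define Cc where "Cc = (\<Sum>e\<in>E. (norm (L e - ls e))\<^sup>2)"
  have V: "Vfun N E tau zeta rho gamma X Y L xs ys ls = A + B + Cc / (2 * gamma * rho)"
    unfolding Vfun_def A_def B_def Cc_def by simp
  have An: "0 \<le> A" unfolding A_def using w1 by (intro sum_nonneg) auto
  have Bn: "0 \<le> B" unfolding B_def using w2 by (intro sum_nonneg) auto
  have Cn: "0 \<le> Cc / (2 * gamma * rho)" unfolding Cc_def using gr by (intro divide_nonneg_pos sum_nonneg) auto
  {
    fix i assume i: "i < N"
    have "zeta i / 2 * (norm (Y i - ys i))\<^sup>2 \<le> B"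
      unfolding B_def by (rule member_le_sum) (use i w2 in auto)
    then show "zeta i / 2 * (norm (Y i - ys i))\<^sup>2 \<le> Vfun N E tau zeta rho gamma X Y L xs ys ls"
      unfolding V using An Cn by simp
  }
  {
    fix e assume e: "e \<in> E"
    have "(norm (L e - ls e))\<^sup>2 \<le> Cc"
      unfolding Cc_def by (rule member_le_sum) (use e fin in auto)
    then have "(norm (L e - ls e))\<^sup>2 / (2 * gamma * rho) \<le> Cc / (2 * gamma * rho)"
      using gr by (intro divide_right_mono) auto
    then show "1 / (2 * gamma * rho) * (norm (L e - ls e))\<^sup>2 \<le> Vfun N E tau zeta rho gamma X Y L xs ys ls"
      unfolding V using An Bn by simp
  }
qed

lemma bounded_from_sq:
  fixes X :: "nat \<Rightarrow> 'a::real_normed_vector"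
  assumes c: "c > 0" and b: "\<And>k. c * (norm (X k - l))\<^sup>2 \<le> B"
  shows "bounded (range X)"
proof -
  have "norm (X k) \<le> norm l + (1 + B / c)" for k
  proof -
    have "(norm (X k - l))\<^sup>2 \<le> B / c" using b[of k] c by (simp add: pos_le_divide_eq mult.commute)
    moreover have "norm (X k - l) \<le> 1 + (norm (X k - l))\<^sup>2"
    proof -
      have "(norm (X k - l) - 1)\<^sup>2 = (norm (X k - l))\<^sup>2 - 2 * norm (X k - l) + 1"
        by (simp add: power2_eq_square algebra_simps)
      moreover have "0 \<le> (norm (X k - l) - 1)\<^sup>2" "0 \<le> (norm (X k - l))\<^sup>2" by simp_all
      ultimately show ?thesis by linarith
    qed
    moreover have "norm (X k) \<le> norm l + norm (X k - l)" by (metis norm_triangle_sub add.commute)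
    ultimately show ?thesis by linarith
  qed
  then show ?thesis unfolding bounded_iff by blast
qed

lemma ATlam_tendsto:
  fixes a :: "nat \<Rightarrow> nat \<times> nat \<Rightarrow> 'a::real_normed_vector"
  assumes "\<And>e. e \<in> E \<Longrightarrow> (\<lambda>k. a k e) \<longlonglongrightarrow> b e"
  shows "(\<lambda>k. ATlam E (a k) i) \<longlonglongrightarrow> ATlam E b i"
proof -
  have 1: "(\<lambda>k. \<Sum>e\<in>{e\<in>E. fst e = i}. a k e) \<longlonglongrightarrow> (\<Sum>e\<in>{e\<in>E. fst e = i}. b e)"
    by (rule tendsto_sum[where f="\<lambda>e k. a k e" and a=b]) (use assms in auto)
  have 2: "(\<lambda>k. \<Sum>e\<in>{e\<in>E. snd e = i}. a k e) \<longlonglongrightarrow> (\<Sum>e\<in>{e\<in>E. snd e = i}. b e)"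
    by (rule tendsto_sum[where f="\<lambda>e k. a k e" and a=b]) (use assms in auto)
  show ?thesis unfolding ATlam_def by (rule tendsto_diff[OF 1 2])
qed



theorem theorem1:
  fixes N :: nat and E :: "(nat \<times> nat) set"
    and f :: "nat \<Rightarrow> 'a::euclidean_space \<times> 'a \<Rightarrow> real"
    and G :: "nat \<Rightarrow> 'a \<times> 'a \<Rightarrow> 'a \<times> 'a"
    and C :: "nat \<Rightarrow> real"
    and mu1 mu2 m rho gamma :: real
    and tau zeta eps :: "nat \<Rightarrow> real"
    and Wc Wh :: "nat \<Rightarrow> nat \<Rightarrow> 'a"
    and lam :: "nat \<Rightarrow> nat \<times> nat \<Rightarrow> 'a"
  assumes N2: "N \<ge> 2"
    and edges: "edge_set N E"
    and conn: "connected_graph N E"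
    and grad: "\<And>i z. i < N \<Longrightarrow> GDERIV (f i) z :> G i z"
    and cvx: "\<And>i. i < N \<Longrightarrow> convex_on UNIV (f i)"
    and lip: "\<And>i. i < N \<Longrightarrow> lipschitz_on (C i) UNIV (G i)"
    and mu1: "mu1 \<ge> 0" and mu2: "mu2 > 0"
    and m: "0 < m" "m \<le> mu2"
    and tau: "\<And>i. i < N \<Longrightarrow> tau i > 0"
    and zeta: "\<And>i. i < N \<Longrightarrow> zeta i > 0"
    and rho: "rho > 0"
    and kkt_ex: "\<exists>Wc' Wh' lam'. KKT N E f mu1 mu2 Wc' Wh' lam'"
    and gamma: "0 < gamma" "gamma < 2"
    and eps: "\<And>i. i < N \<Longrightarrow> 0 < eps i \<and> eps i < 1"
    and tau_bound: "\<And>i. i < N \<Longrightarrow> tau i > rho * (1 / eps i - 1) * real (deg E i)"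
    and zeta_bound: "\<And>i. i < N \<Longrightarrow> zeta i > C i / m * (C i + m)"
    and eps_sum: "(\<Sum>i<N. eps i) < 2 - gamma"
    and step_i: "\<And>k i w. i < N \<Longrightarrow>
        Lrho N E f mu1 mu2 rho ((Wc k)(i := Wc (Suc k) i)) (Wh k) (lam k)
          + tau i / 2 * (norm (Wc (Suc k) i - Wc k i))\<^sup>2
        \<le> Lrho N E f mu1 mu2 rho ((Wc k)(i := w)) (Wh k) (lam k)
          + tau i / 2 * (norm (w - Wc k i))\<^sup>2"
    and step_ii: "\<And>k e. e \<in> E \<Longrightarrow>
        lam (Suc k) e = lam k e - (gamma * rho) *\<^sub>R Aw (Wc (Suc k)) e"
    and step_iii: "\<And>k i w. i < N \<Longrightarrow>
        Fi f mu1 mu2 i (Wc (Suc k) i, Wh (Suc k) i) + zeta i / 2 * (norm (Wh (Suc k) i - Wh k i))\<^sup>2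
        \<le> Fi f mu1 mu2 i (Wc (Suc k) i, w) + zeta i / 2 * (norm (w - Wh k i))\<^sup>2"
  shows "\<exists>Wcs Whs lams. KKT N E f mu1 mu2 Wcs Whs lams \<and>
           (\<forall>i<N. (\<lambda>k. Wc k i) \<longlonglongrightarrow> Wcs i) \<and>
           (\<forall>i<N. (\<lambda>k. Wh k i) \<longlonglongrightarrow> Whs i) \<and>
           (\<forall>e\<in>E. (\<lambda>k. lam k e) \<longlonglongrightarrow> lams e)"
proof -
  have fin: "finite E" by (rule finE[OF edges])
  from kkt_ex obtain xs0 ys0 ls0 where K0: "KKT N E f mu1 mu2 xs0 ys0 ls0" by blast
  have Cnn: "C i \<ge> 0" if "i < N" for i using lip_norm(2)[OF lip[OF that]] .
  have "\<forall>i. \<exists>c. i < N \<longrightarrow> (C i \<le> c \<and> 0 < c \<and> 0 < zeta i / 2 - c\<^sup>2 / (4 * m) - c / 4)"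
  proof
    fix i show "\<exists>c. i < N \<longrightarrow> (C i \<le> c \<and> 0 < c \<and> 0 < zeta i / 2 - c\<^sup>2 / (4 * m) - c / 4)"
    proof (cases "i < N")
      case True
      then show ?thesis using Cp_exists[OF Cnn[OF True] m(1) zeta_bound[OF True]] by blast
    qed auto
  qed
  then obtain Cp where Cp: "\<And>i. i < N \<Longrightarrow> C i \<le> Cp i \<and> 0 < Cp i \<and> 0 < zeta i / 2 - (Cp i)\<^sup>2 / (4 * m) - Cp i / 4"
    by metis
  have Lp: "norm (G i a - G i b) \<le> Cp i * norm (a - b)" if i: "i < N" for i a b
  proof -
    have "norm (G i a - G i b) \<le> C i * norm (a - b)" by (rule lip_norm(1)[OF lip[OF i]])
    also have "\<dots> \<le> Cp i * norm (a - b)" using Cp[OF i] by (intro mult_right_mono) auto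
    finally show ?thesis .
  qed
  have xeq: "fst (G i (Wc (Suc k) i, Wh k i)) + mu1 *\<^sub>R Wc (Suc k) i - ATlam E (lam k) i
      + rho *\<^sub>R ATlam E (Aw ((Wc k)(i := Wc (Suc k) i))) i + tau i *\<^sub>R (Wc (Suc k) i - Wc k i) = 0"
    if i: "i < N" for i k
    by (rule xstep_eq[where G = "G i" and tau = "tau i", OF edges i grad[OF i] step_i[OF i]])
  have yeq: "snd (G i (Wc (Suc k) i, Wh (Suc k) i)) + mu2 *\<^sub>R Wh (Suc k) i + zeta i *\<^sub>R (Wh (Suc k) i - Wh k i) = 0"
    if i: "i < N" for i k
    by (rule ystep_eq[where G = "G i" and zeta = "zeta i", OF grad[OF i] step_iii[OF i]])
  define cc where "cc i = zeta i / 2 - (Cp i)\<^sup>2 / (4 * m) - Cp i / 4" for i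
  define bb where "bb i = (tau i + rho * real (deg E i) - rho * real (deg E i) / eps i) / 2" for i
  define \<kappa> where "\<kappa> = rho / 2 * (2 - gamma - (\<Sum>i<N. eps i))"
  define D where "D k = (\<Sum>i<N. cc i * (norm (Wh (Suc k) i - Wh k i))\<^sup>2)
     + (\<Sum>i<N. bb i * (norm (Wc (Suc k) i - Wc k i))\<^sup>2)
     + \<kappa> * (\<Sum>e\<in>E. (norm (Aw (Wc (Suc k)) e))\<^sup>2)" for k
  have ccpos: "cc i > 0" if "i < N" for i using Cp[OF that] unfolding cc_def by simp
  have bbpos: "bb i > 0" if i: "i < N" for i
  proof -
    have e: "eps i > 0" using eps[OF i] by simp
    have "rho * (1 / eps i - 1) * real (deg E i) = rho * real (deg E i) / eps i - rho * real (deg E i)"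
      using e by (simp add: field_simps)
    then show ?thesis using tau_bound[OF i] unfolding bb_def by simp
  qed
  have \<kappa>pos: "\<kappa> > 0" unfolding \<kappa>_def using rho eps_sum by simp
  have Dnn: "0 \<le> D k" for k
    unfolding D_def using ccpos bbpos \<kappa>pos
    by (intro add_nonneg_nonneg sum_nonneg mult_nonneg_nonneg) (auto intro: less_imp_le)
  have desc: "Vfun N E tau zeta rho gamma (Wc (Suc k)) (Wh (Suc k)) (lam (Suc k)) xs ys ls + D k
      \<le> Vfun N E tau zeta rho gamma (Wc k) (Wh k) (lam k) xs ys ls"
    if K: "KKT N E f mu1 mu2 xs ys ls" for xs ys ls k
    unfolding D_def cc_def bb_def \<kappa>_def add.assoc[symmetric]
  proof (rule descent_step[where G = G and f = f and Cp = Cp and eps = eps])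
    show "edge_set N E" by (rule edges)
  qed (use grad cvx Lp Cp mu1 m rho gamma eps xeq yeq step_ii kkt_eqs[OF K grad] in auto)
  have w1: "0 \<le> tau i + rho * real (deg E i)" if "i < N" for i
  proof -
    have "0 \<le> rho * real (deg E i)" using rho by simp
    then show ?thesis using tau[OF that] by simp
  qed
  have w2: "0 \<le> zeta i" if "i < N" for i using zeta[OF that] by simp
  have gr: "gamma * rho > 0" using gamma rho by simp
  have VG1: "(tau i + rho * real (deg E i)) / 2 * (norm (X i - xs i))\<^sup>2 \<le> Vfun N E tau zeta rho gamma X Y L xs ys ls"
    if "i < N" for i X Y L xs ys ls
    by (rule Vfun_ge(1)[OF _ _ gr fin]) (use w1 w2 that in auto)
  have VG2: "zeta i / 2 * (norm (Y i - ys i))\<^sup>2 \<le> Vfun N E tau zeta rho gamma X Y L xs ys ls"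
    if "i < N" for i X Y L xs ys ls
    by (rule Vfun_ge(2)[OF _ _ gr fin]) (use w1 w2 that in auto)
  have VG3: "1 / (2 * gamma * rho) * (norm (L e - ls e))\<^sup>2 \<le> Vfun N E tau zeta rho gamma X Y L xs ys ls"
    if "e \<in> E" for e X Y L xs ys ls
    by (rule Vfun_ge(3)[OF _ _ gr fin]) (use w1 w2 that in auto)
  have VG4: "0 \<le> Vfun N E tau zeta rho gamma X Y L xs ys ls" for X Y L xs ys ls
    by (rule Vfun_ge(4)[OF _ _ gr fin]) (use w1 w2 in auto)
  define V0 where "V0 k = Vfun N E tau zeta rho gamma (Wc k) (Wh k) (lam k) xs0 ys0 ls0" for k
  have V0step: "V0 (Suc k) + D k \<le> V0 k" for k unfolding V0_def by (rule desc[OF K0])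
  have V0nn: "0 \<le> V0 k" for k unfolding V0_def by (rule VG4)
  have Dlim: "D \<longlonglongrightarrow> 0" by (rule telescoping_zero[of D V0]) (use Dnn V0step V0nn in auto)
  have V0dec: "V0 k \<le> V0 0" for k
  proof (induction k)
    case 0 show ?case by simp
  next
    case (Suc k) then show ?case using V0step[of k] Dnn[of k] by linarith
  qed
  define S1 where "S1 k = (\<Sum>i<N. cc i * (norm (Wh (Suc k) i - Wh k i))\<^sup>2)" for k
  define S2 where "S2 k = (\<Sum>i<N. bb i * (norm (Wc (Suc k) i - Wc k i))\<^sup>2)" for k
  define S3 where "S3 k = (\<Sum>e\<in>E. (norm (Aw (Wc (Suc k)) e))\<^sup>2)" for k
  have DS: "D k = S1 k + S2 k + \<kappa> * S3 k" for k unfolding D_def S1_def S2_def S3_def by simp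
  have S1n: "0 \<le> S1 k" for k unfolding S1_def using ccpos by (intro sum_nonneg mult_nonneg_nonneg) (auto intro: less_imp_le)
  have S2n: "0 \<le> S2 k" for k unfolding S2_def using bbpos by (intro sum_nonneg mult_nonneg_nonneg) (auto intro: less_imp_le)
  have S3n: "0 \<le> \<kappa> * S3 k" for k unfolding S3_def using \<kappa>pos by (intro sum_nonneg mult_nonneg_nonneg) auto
  have ccnn: "0 \<le> cc i" if "i < N" for i using ccpos[OF that] by simp
  have bbnn: "0 \<le> bb i" if "i < N" for i using bbpos[OF that] by simp
  have vlim: "(\<lambda>k. Wh (Suc k) i - Wh k i) \<longlonglongrightarrow> 0" if i: "i < N" for i
  proof (rule sq_bound_tendsto[OF ccpos[OF i] _ Dlim])
    fix k
    have "cc i * (norm (Wh (Suc k) i - Wh k i))\<^sup>2 \<le> S1 k"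
      unfolding S1_def by (rule member_le_sum) (use i in \<open>auto intro!: mult_nonneg_nonneg ccnn\<close>)
    then show "cc i * (norm (Wh (Suc k) i - Wh k i))\<^sup>2 \<le> D k" using DS[of k] S2n[of k] S3n[of k] by linarith
  qed
  have ulim: "(\<lambda>k. Wc (Suc k) i - Wc k i) \<longlonglongrightarrow> 0" if i: "i < N" for i
  proof (rule sq_bound_tendsto[OF bbpos[OF i] _ Dlim])
    fix k
    have "bb i * (norm (Wc (Suc k) i - Wc k i))\<^sup>2 \<le> S2 k"
      unfolding S2_def by (rule member_le_sum) (use i in \<open>auto intro!: mult_nonneg_nonneg bbnn\<close>)
    then show "bb i * (norm (Wc (Suc k) i - Wc k i))\<^sup>2 \<le> D k" using DS[of k] S1n[of k] S3n[of k] by linarith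
  qed
  have rlim: "(\<lambda>k. Aw (Wc (Suc k)) e) \<longlonglongrightarrow> 0" if e: "e \<in> E" for e
  proof (rule sq_bound_tendsto[OF \<kappa>pos _ Dlim])
    fix k
    have "(norm (Aw (Wc (Suc k)) e))\<^sup>2 \<le> S3 k"
      unfolding S3_def by (rule member_le_sum) (use e fin in auto)
    then have "\<kappa> * (norm (Aw (Wc (Suc k)) e))\<^sup>2 \<le> \<kappa> * S3 k" using \<kappa>pos by simp
    then show "\<kappa> * (norm (Aw (Wc (Suc k)) e))\<^sup>2 \<le> D k" using DS[of k] S1n[of k] S2n[of k] by linarith
  qed
  have rlim0: "(\<lambda>k. Aw (Wc k) e) \<longlonglongrightarrow> 0" if e: "e \<in> E" for e
    using rlim[OF e] filterlim_sequentially_Suc[of "\<lambda>k. Aw (Wc k) e"] by simp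
  have w1p: "0 < (tau i + rho * real (deg E i)) / 2" if "i < N" for i
  proof -
    have "0 \<le> rho * real (deg E i)" using rho by simp
    then show ?thesis using tau[OF that] by simp
  qed
  have w2p: "0 < zeta i / 2" if "i < N" for i using zeta[OF that] by simp
  have w3p: "0 < 1 / (2 * gamma * rho)" using gr by simp
  have bx: "bounded (range (\<lambda>k. Wc k i))" if i: "i < N" for i
    by (rule bounded_from_sq[OF w1p[OF i], of _ "xs0 i" "V0 0"])
      (use VG1[OF i] V0dec in \<open>unfold V0_def, blast intro: order_trans\<close>)
  have byy: "bounded (range (\<lambda>k. Wh k i))" if i: "i < N" for i
    by (rule bounded_from_sq[OF w2p[OF i], of _ "ys0 i" "V0 0"])
      (use VG2[OF i] V0dec in \<open>unfold V0_def, blast intro: order_trans\<close>)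
  have bl: "bounded (range (\<lambda>k. lam k e))" if e: "e \<in> E" for e
    by (rule bounded_from_sq[OF w3p, of _ "ls0 e" "V0 0"])
      (use VG3[OF e] V0dec in \<open>unfold V0_def, blast intro: order_trans\<close>)
  define s :: "nat + nat + (nat \<times> nat) \<Rightarrow> nat \<Rightarrow> 'a" where
    "s j = (case j of Inl i \<Rightarrow> (\<lambda>k. Wc k i) | Inr (Inl i) \<Rightarrow> (\<lambda>k. Wh k i) | Inr (Inr e) \<Rightarrow> (\<lambda>k. lam k e))" for j
  define I where "I = Inl ` {..<N} \<union> Inr ` (Inl ` {..<N} \<union> Inr ` E)"
  have finI: "finite I" unfolding I_def using fin by simp
  have bI: "bounded (range (s j))" if "j \<in> I" for j
    using that bx byy bl unfolding I_def s_def by auto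
  obtain r l where r: "strict_mono r" and lm: "\<forall>j\<in>I. (s j \<circ> r) \<longlonglongrightarrow> l j"
  proof -
    have "\<exists>r l. strict_mono r \<and> (\<forall>j\<in>I. (s j \<circ> r) \<longlonglongrightarrow> l j)"
      by (rule multi_subseq[OF finI]) (rule bI)
    then show ?thesis using that by blast
  qed
  define xb where "xb i = l (Inl i)" for i
  define yb where "yb i = l (Inr (Inl i))" for i
  define lb where "lb e = l (Inr (Inr e))" for e
  have hx: "(\<lambda>j. Wc (r j) i) \<longlonglongrightarrow> xb i" if "i < N" for i
    using lm[rule_format, of "Inl i"] that unfolding I_def s_def xb_def by (simp add: o_def)
  have hy: "(\<lambda>j. Wh (r j) i) \<longlonglongrightarrow> yb i" if "i < N" for i
    using lm[rule_format, of "Inr (Inl i)"] that unfolding I_def s_def yb_def by (simp add: o_def)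
  have hl: "(\<lambda>j. lam (r j) e) \<longlonglongrightarrow> lb e" if "e \<in> E" for e
    using lm[rule_format, of "Inr (Inr e)"] that unfolding I_def s_def lb_def by (simp add: o_def)
  have KA: "Aw xb e = 0" if e: "e \<in> E" for e
  proof -
    have lt: "fst e < N" "snd e < N" using edge_props[OF edges e] by auto
    have 1: "(\<lambda>j. Aw (Wc (r j)) e) \<longlonglongrightarrow> Aw xb e"
      unfolding Aw_def by (intro tendsto_diff hx lt)
    have 2: "(\<lambda>j. Aw (Wc (r j)) e) \<longlonglongrightarrow> 0"
      using LIMSEQ_subseq_LIMSEQ[OF rlim0[OF e] r] by (simp add: o_def)
    show ?thesis using LIMSEQ_unique[OF 1 2] .
  qed
  have usub: "(\<lambda>j. Wc (Suc (r j)) i - Wc (r j) i) \<longlonglongrightarrow> 0" if "i < N" for i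
    using LIMSEQ_subseq_LIMSEQ[OF ulim[OF that] r] by (simp add: o_def)
  have vsub: "(\<lambda>j. Wh (Suc (r j)) i - Wh (r j) i) \<longlonglongrightarrow> 0" if "i < N" for i
    using LIMSEQ_subseq_LIMSEQ[OF vlim[OF that] r] by (simp add: o_def)
  have hx1: "(\<lambda>j. Wc (Suc (r j)) i) \<longlonglongrightarrow> xb i" if "i < N" for i
    using tendsto_add[OF hx[OF that] usub[OF that]] by simp
  have hy1: "(\<lambda>j. Wh (Suc (r j)) i) \<longlonglongrightarrow> yb i" if "i < N" for i
    using tendsto_add[OF hy[OF that] vsub[OF that]] by simp
  have KX: "fst (G i (xb i, yb i)) + mu1 *\<^sub>R xb i = ATlam E lb i" if i: "i < N" for i
  proof -
    have c: "isCont (G i) (xb i, yb i)" by (rule lip_cont[OF lip[OF i]])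
    have g: "(\<lambda>j. G i (Wc (Suc (r j)) i, Wh (r j) i)) \<longlonglongrightarrow> G i (xb i, yb i)"
      by (rule isCont_tendsto_compose[OF c tendsto_Pair[OF hx1[OF i] hy[OF i]]])
    have at: "(\<lambda>j. ATlam E (lam (r j)) i) \<longlonglongrightarrow> ATlam E lb i"
      by (rule ATlam_tendsto) (use hl in auto)
    have aw: "(\<lambda>k. ATlam E (Aw ((Wc k)(i := Wc (Suc k) i))) i) \<longlonglongrightarrow> 0"
    proof -
      have eq: "ATlam E (Aw ((Wc k)(i := Wc (Suc k) i))) i = ATlam E (\<lambda>e. Aw (Wc k) e + cf i e *\<^sub>R (Wc (Suc k) i - Wc k i)) i" for k
        by (rule ATlam_cong) (simp add: Aw_upd[OF edges])
      have "(\<lambda>k. ATlam E (\<lambda>e. Aw (Wc k) e + cf i e *\<^sub>R (Wc (Suc k) i - Wc k i)) i) \<longlonglongrightarrow> ATlam E (\<lambda>e. 0 + cf i e *\<^sub>R 0) i"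
        by (rule ATlam_tendsto) (intro tendsto_add tendsto_scaleR tendsto_const rlim0 ulim i, simp)
      moreover have "ATlam E (\<lambda>e. 0 + cf i e *\<^sub>R (0::'a)) i = 0" unfolding ATlam_def by simp
      ultimately show ?thesis unfolding eq by simp
    qed
    have aw': "(\<lambda>j. ATlam E (Aw ((Wc (r j))(i := Wc (Suc (r j)) i))) i) \<longlonglongrightarrow> 0"
      using LIMSEQ_subseq_LIMSEQ[OF aw r] by (simp add: o_def)
    have Q: "(\<lambda>j. fst (G i (Wc (Suc (r j)) i, Wh (r j) i)) + mu1 *\<^sub>R Wc (Suc (r j)) i - ATlam E (lam (r j)) i
      + rho *\<^sub>R ATlam E (Aw ((Wc (r j))(i := Wc (Suc (r j)) i))) i + tau i *\<^sub>R (Wc (Suc (r j)) i - Wc (r j) i))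
      \<longlonglongrightarrow> fst (G i (xb i, yb i)) + mu1 *\<^sub>R xb i - ATlam E lb i + rho *\<^sub>R 0 + tau i *\<^sub>R 0"
      by (intro tendsto_add tendsto_diff tendsto_fst g tendsto_scaleR tendsto_const hx1 i at aw' usub)
    then have "(\<lambda>j. (0::'a)) \<longlonglongrightarrow> fst (G i (xb i, yb i)) + mu1 *\<^sub>R xb i - ATlam E lb i"
      using xeq[OF i] by simp
    then have "0 = fst (G i (xb i, yb i)) + mu1 *\<^sub>R xb i - ATlam E lb i"
      by (simp add: LIMSEQ_const_iff)
    then show ?thesis by (simp add: algebra_simps)
  qed
  have KY: "snd (G i (xb i, yb i)) + mu2 *\<^sub>R yb i = 0" if i: "i < N" for i
  proof -
    have c: "isCont (G i) (xb i, yb i)" by (rule lip_cont[OF lip[OF i]])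
    have g: "(\<lambda>j. G i (Wc (Suc (r j)) i, Wh (Suc (r j)) i)) \<longlonglongrightarrow> G i (xb i, yb i)"
      by (rule isCont_tendsto_compose[OF c tendsto_Pair[OF hx1[OF i] hy1[OF i]]])
    have Q: "(\<lambda>j. snd (G i (Wc (Suc (r j)) i, Wh (Suc (r j)) i)) + mu2 *\<^sub>R Wh (Suc (r j)) i + zeta i *\<^sub>R (Wh (Suc (r j)) i - Wh (r j) i))
      \<longlonglongrightarrow> snd (G i (xb i, yb i)) + mu2 *\<^sub>R yb i + zeta i *\<^sub>R 0"
      by (intro tendsto_add tendsto_snd g tendsto_scaleR tendsto_const hy1 i vsub)
    then have "(\<lambda>j. (0::'a)) \<longlonglongrightarrow> snd (G i (xb i, yb i)) + mu2 *\<^sub>R yb i"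
      using yeq[OF i] by simp
    then show ?thesis by (simp add: LIMSEQ_const_iff)
  qed
  have KB: "KKT N E f mu1 mu2 xb yb lb" by (rule kkt_of_eqs[OF grad KA KX KY])
  define Vb where "Vb k = Vfun N E tau zeta rho gamma (Wc k) (Wh k) (lam k) xb yb lb" for k
  have Vbstep: "Vb (Suc k) \<le> Vb k" for k unfolding Vb_def using desc[OF KB, of k] Dnn[of k] by linarith
  have Vbnn: "0 \<le> Vb k" for k unfolding Vb_def by (rule VG4)
  have Vbsub: "(Vb \<circ> r) \<longlonglongrightarrow> 0"
  proof -
    have "(\<lambda>j. Vb (r j)) \<longlonglongrightarrow>
       (\<Sum>i<N. (tau i + rho * real (deg E i)) / 2 * (norm (xb i - xb i))\<^sup>2)
     + (\<Sum>i<N. zeta i / 2 * (norm (yb i - yb i))\<^sup>2)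
     + (\<Sum>e\<in>E. (norm (lb e - lb e))\<^sup>2) / (2 * gamma * rho)"
      unfolding Vb_def Vfun_def using gr
      by (intro tendsto_add tendsto_divide tendsto_sum tendsto_mult tendsto_power tendsto_norm tendsto_diff
          tendsto_const hx hy hl) auto
    then show ?thesis by (simp add: o_def)
  qed
  have Vblim: "Vb \<longlonglongrightarrow> 0" by (rule dec_sub_zero[OF Vbstep Vbnn r Vbsub])
  have cx: "(\<lambda>k. Wc k i) \<longlonglongrightarrow> xb i" if i: "i < N" for i
    by (rule sq_bound_tendsto'[OF w1p[OF i] _ Vblim]) (unfold Vb_def, rule VG1[OF i])
  have cy: "(\<lambda>k. Wh k i) \<longlonglongrightarrow> yb i" if i: "i < N" for i
    by (rule sq_bound_tendsto'[OF w2p[OF i] _ Vblim]) (unfold Vb_def, rule VG2[OF i])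
  have cl: "(\<lambda>k. lam k e) \<longlonglongrightarrow> lb e" if e: "e \<in> E" for e
    by (rule sq_bound_tendsto'[OF w3p _ Vblim]) (unfold Vb_def, rule VG3[OF e])
  show ?thesis using KB cx cy cl by blast
qed

end
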